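(* Let $0<\epsilon<1$ and assume $E\setminus T\neq\emptyset$. Run the SimpleSolver process for $K=\left\lceil \tau \ln\!\big(\mathrm{st}(T)\,\tau/\epsilon\big)\right\rceil$ cycle updates, obtaining $f_K$ and its tree induced voltages $v_K$. Then \[ \mathbb{E}\big[\xi_r(f_K)\big]\le (1+\epsilon)\,\xi_r(f^* )\qquad\text{and}\qquad \mathbb{E}\,\big\|v_K-L^\dagger\chi\big\|_L\le \sqrt{\epsilon}\,\big\|L^\dagger\chi\big\|_L . \]
   Context: Let $G=(V,E,w)$ be a connected undirected graph with $n=|V|$, $m=|E|$, edge weights $w_e>0$ and resistances $r_e=1/w_e$. Each edge has a fixed orientation $(a,b)$; for $f\in\mathbb{R}^E$ write $f(b,a):=-f(a,b)$. The incidence matrix $B\in\mathbb{R}^{E\times V}$ has $B_{(a,b),c}=1$ if $c=a$, $-1$ if $c=b$, $0$ otherwise; $R=\mathrm{diag}(r_e)_{e\in E}$; the Laplacian is $L=B^TR^{-1}B$ and $L^\dagger$ is its Moore–Penrose pseudoinverse; $\|x\|_M=\sqrt{x^TMx}$. The energy of $f\in\mathbb{R}^E$ is $\xi_r(f)=f^TRf$. Fix $\chi\in\mathbb{R}^V$ with $\sum_a\chi(a)=0$; $f$ is feasible if $B^Tf=\chi$; $f^*$ is the unique feasible $f$ minimizing $\xi_r(f)$. Let $T\subseteq E$ be a spanning tree. For vertices $a,b$, $\pi_{(a,b)}\in\mathbb{R}^E$ is the unit flow from $a$ to $b$ along the unique $a$–$b$ path in $T$, and $P_{(a,b)}$ is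 the set of edges of that path. For $e=(a,b)\in E\setminus T$, the tree cycle vector is $c_e=\mathbf{1}_e-\pi_{(a,b)}$, $R_e=c_e^TRc_e$, and $\Delta_e(f)=f^TRc_e$. The tree condition number is $\tau=\sum_{e\in E\setminus T}R_e/r_e$. The stretch of $e=(a,b)\in E$ is $\mathrm{st}(e)=\frac{1}{r_e}\sum_{e'\in P_{(a,b)}}r_{e'}$ and $\mathrm{st}(T)=\sum_{e\in E}\mathrm{st}(e)$. Fix a root $s\in V$; the tree induced voltages of $f$ are $v(a)=\sum r_{e'}f(e')$, summing over the edges $e'$ of the tree path from $a$ to $s$, each traversed in the direction of the path (with the antisymmetry convention). Let $p$ be the probability distribution on $E\setminus T$ with $p_e=\frac{R_e}{r_e\tau}$. The SimpleSolver process: $f_0$ is the unique feasible flow supported on $T$; for $i\ge1$, $e_i$ is drawn from $p$ independently of everything else and $f_i=f_{i-1}-\frac{\Delta_{e_i}(f_{i-1})}{R_{e_i}}c_{e_i}$; $v_i$ denotes the tree induced voltages of $f_i$. *)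

theory Defs
  imports Complex_Main
begin

text \<open>Graphs: vertex set V, edge set E (edges are abstract identifiers, so parallel
edges are allowed), each edge e oriented as (src e, dst e). Vectors in R^E and R^V are
functions; only their values on E resp. V matter.\<close>

definition graph :: "'v set \<Rightarrow> 'e set \<Rightarrow> ('e \<Rightarrow> 'v) \<Rightarrow> ('e \<Rightarrow> 'v) \<Rightarrow> bool" where
  "graph V E src dst \<longleftrightarrow> finite V \<and> finite E \<and>
     (\<forall>e\<in>E. src e \<in> V \<and> dst e \<in> V \<and> src e \<noteq> dst e)"

definition adj :: "('e \<Rightarrow> 'v) \<Rightarrow> ('e \<Rightarrow> 'v) \<Rightarrow> 'e set \<Rightarrow> 'v \<Rightarrow> 'v \<Rightarrow> bool" where
  "adj src dst F x y \<longleftrightarrow> (\<exists>e\<in>F. (src e = x \<and> dst e = y) \<or> (src e = y \<and> dst e = x))"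

definition walk :: "('e \<Rightarrow> 'v) \<Rightarrow> ('e \<Rightarrow> 'v) \<Rightarrow> 'e set \<Rightarrow> 'v list \<Rightarrow> bool" where
  "walk src dst F xs \<longleftrightarrow> (\<forall>i. Suc i < length xs \<longrightarrow> adj src dst F (xs ! i) (xs ! Suc i))"

definition connected_on :: "('e \<Rightarrow> 'v) \<Rightarrow> ('e \<Rightarrow> 'v) \<Rightarrow> 'v set \<Rightarrow> 'e set \<Rightarrow> bool" where
  "connected_on src dst V F \<longleftrightarrow>
     (\<forall>a\<in>V. \<forall>b\<in>V. \<exists>xs. xs \<noteq> [] \<and> hd xs = a \<and> last xs = b \<and> walk src dst F xs)"

definition spanning_tree :: "'v set \<Rightarrow> 'e set \<Rightarrow> ('e \<Rightarrow> 'v) \<Rightarrow> ('e \<Rightarrow> 'v) \<Rightarrow> 'e set \<Rightarrow> bool" where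
  "spanning_tree V E src dst T \<longleftrightarrow> T \<subseteq> E \<and> connected_on src dst V T \<and> card T = card V - 1"

definition tree_path :: "('e \<Rightarrow> 'v) \<Rightarrow> ('e \<Rightarrow> 'v) \<Rightarrow> 'e set \<Rightarrow> 'v \<Rightarrow> 'v \<Rightarrow> 'v list" where
  "tree_path src dst T a b =
     (THE xs. xs \<noteq> [] \<and> hd xs = a \<and> last xs = b \<and> distinct xs \<and> walk src dst T xs)"

text \<open>pi_(a,b): unit flow from a to b along the tree path.\<close>
definition tree_flow :: "('e \<Rightarrow> 'v) \<Rightarrow> ('e \<Rightarrow> 'v) \<Rightarrow> 'e set \<Rightarrow> 'v \<Rightarrow> 'v \<Rightarrow> 'e \<Rightarrow> real" where
  "tree_flow src dst T a b e =
     (if e \<in> T then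
        (let p = tree_path src dst T a b in
           \<Sum>i<length p - 1.
             (if src e = p ! i \<and> dst e = p ! Suc i then 1
              else if src e = p ! Suc i \<and> dst e = p ! i then -1 else 0))
      else 0)"

definition path_edges :: "('e \<Rightarrow> 'v) \<Rightarrow> ('e \<Rightarrow> 'v) \<Rightarrow> 'e set \<Rightarrow> 'v \<Rightarrow> 'v \<Rightarrow> 'e set" where
  "path_edges src dst T a b =
     (let p = tree_path src dst T a b in
       {e\<in>T. \<exists>i. Suc i < length p \<and>
          ((src e = p ! i \<and> dst e = p ! Suc i) \<or> (src e = p ! Suc i \<and> dst e = p ! i))})"

definition res :: "('e \<Rightarrow> real) \<Rightarrow> 'e \<Rightarrow> real" where
  "res w e = 1 / w e"

definition inc :: "('e \<Rightarrow> 'v) \<Rightarrow> ('e \<Rightarrow> 'v) \<Rightarrow> 'e \<Rightarrow> 'v \<Rightarrow> real" where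
  "inc src dst e c = (if c = src e then 1 else if c = dst e then -1 else 0)"

definition energy :: "'e set \<Rightarrow> ('e \<Rightarrow> real) \<Rightarrow> ('e \<Rightarrow> real) \<Rightarrow> real" where
  "energy E w f = (\<Sum>e\<in>E. res w e * (f e)\<^sup>2)"

definition feasible :: "'v set \<Rightarrow> 'e set \<Rightarrow> ('e \<Rightarrow> 'v) \<Rightarrow> ('e \<Rightarrow> 'v) \<Rightarrow> ('v \<Rightarrow> real) \<Rightarrow> ('e \<Rightarrow> real) \<Rightarrow> bool" where
  "feasible V E src dst chi f \<longleftrightarrow> (\<forall>c\<in>V. (\<Sum>e\<in>E. inc src dst e c * f e) = chi c)"

text \<open>f*: the unique energy-minimising feasible flow (flows are vectors in R^E, i.e. zero off E).\<close>
definition opt_flow :: "'v set \<Rightarrow> 'e set \<Rightarrow> ('e \<Rightarrow> 'v) \<Rightarrow> ('e \<Rightarrow> 'v) \<Rightarrow> ('e \<Rightarrow> real) \<Rightarrow> ('v \<Rightarrow> real) \<Rightarrow> 'e \<Rightarrow> real" where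
  "opt_flow V E src dst w chi =
     (THE f. (\<forall>e. e \<notin> E \<longrightarrow> f e = 0) \<and> feasible V E src dst chi f \<and>
        (\<forall>g. (\<forall>e. e \<notin> E \<longrightarrow> g e = 0) \<longrightarrow> feasible V E src dst chi g \<longrightarrow> energy E w f \<le> energy E w g))"

definition tree_flow0 :: "'v set \<Rightarrow> 'e set \<Rightarrow> ('e \<Rightarrow> 'v) \<Rightarrow> ('e \<Rightarrow> 'v) \<Rightarrow> 'e set \<Rightarrow> ('v \<Rightarrow> real) \<Rightarrow> 'e \<Rightarrow> real" where
  "tree_flow0 V E src dst T chi =
     (THE f. (\<forall>e. e \<notin> T \<longrightarrow> f e = 0) \<and> feasible V E src dst chi f)"

definition cycle_vec :: "('e \<Rightarrow> 'v) \<Rightarrow> ('e \<Rightarrow> 'v) \<Rightarrow> 'e set \<Rightarrow> 'e \<Rightarrow> 'e \<Rightarrow> real" where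
  "cycle_vec src dst T e = (\<lambda>e'. (if e' = e then 1 else 0) - tree_flow src dst T (src e) (dst e) e')"

definition cycle_res :: "'e set \<Rightarrow> ('e \<Rightarrow> 'v) \<Rightarrow> ('e \<Rightarrow> 'v) \<Rightarrow> ('e \<Rightarrow> real) \<Rightarrow> 'e set \<Rightarrow> 'e \<Rightarrow> real" where
  "cycle_res E src dst w T e = (\<Sum>e'\<in>E. res w e' * (cycle_vec src dst T e e')\<^sup>2)"

definition Delta :: "'e set \<Rightarrow> ('e \<Rightarrow> 'v) \<Rightarrow> ('e \<Rightarrow> 'v) \<Rightarrow> ('e \<Rightarrow> real) \<Rightarrow> 'e set \<Rightarrow> 'e \<Rightarrow> ('e \<Rightarrow> real) \<Rightarrow> real" where
  "Delta E src dst w T e f = (\<Sum>e'\<in>E. f e' * res w e' * cycle_vec src dst T e e')"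

definition tcond :: "'e set \<Rightarrow> ('e \<Rightarrow> 'v) \<Rightarrow> ('e \<Rightarrow> 'v) \<Rightarrow> ('e \<Rightarrow> real) \<Rightarrow> 'e set \<Rightarrow> real" where
  "tcond E src dst w T = (\<Sum>e\<in>E - T. cycle_res E src dst w T e / res w e)"

definition stretch :: "('e \<Rightarrow> 'v) \<Rightarrow> ('e \<Rightarrow> 'v) \<Rightarrow> ('e \<Rightarrow> real) \<Rightarrow> 'e set \<Rightarrow> 'e \<Rightarrow> real" where
  "stretch src dst w T e = (1 / res w e) * (\<Sum>e'\<in>path_edges src dst T (src e) (dst e). res w e')"

definition tree_stretch :: "'e set \<Rightarrow> ('e \<Rightarrow> 'v) \<Rightarrow> ('e \<Rightarrow> 'v) \<Rightarrow> ('e \<Rightarrow> real) \<Rightarrow> 'e set \<Rightarrow> real" where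
  "tree_stretch E src dst w T = (\<Sum>e\<in>E. stretch src dst w T e)"

text \<open>Tree induced voltages with root s: v(a) = sum of r_e' f(e') over the tree path a -> s,
  each edge taken in the direction of the path (= sum_e r_e f_e pi_(a,s)(e)).\<close>
definition tree_volt :: "'e set \<Rightarrow> ('e \<Rightarrow> 'v) \<Rightarrow> ('e \<Rightarrow> 'v) \<Rightarrow> ('e \<Rightarrow> real) \<Rightarrow> 'e set \<Rightarrow> 'v \<Rightarrow> ('e \<Rightarrow> real) \<Rightarrow> 'v \<Rightarrow> real" where
  "tree_volt E src dst w T s f a = (\<Sum>e\<in>E. res w e * f e * tree_flow src dst T a s e)"

definition cyc_prob :: "'e set \<Rightarrow> ('e \<Rightarrow> 'v) \<Rightarrow> ('e \<Rightarrow> 'v) \<Rightarrow> ('e \<Rightarrow> real) \<Rightarrow> 'e set \<Rightarrow> 'e \<Rightarrow> real" where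
  "cyc_prob E src dst w T e = cycle_res E src dst w T e / (res w e * tcond E src dst w T)"

definition cyc_update :: "'e set \<Rightarrow> ('e \<Rightarrow> 'v) \<Rightarrow> ('e \<Rightarrow> 'v) \<Rightarrow> ('e \<Rightarrow> real) \<Rightarrow> 'e set \<Rightarrow> ('e \<Rightarrow> real) \<Rightarrow> 'e \<Rightarrow> 'e \<Rightarrow> real" where
  "cyc_update E src dst w T f e =
     (\<lambda>e'. f e' - Delta E src dst w T e f / cycle_res E src dst w T e * cycle_vec src dst T e e')"

text \<open>f_K as a function of the sampled edge sequence e_1,...,e_K.\<close>
definition solver_flow :: "'v set \<Rightarrow> 'e set \<Rightarrow> ('e \<Rightarrow> 'v) \<Rightarrow> ('e \<Rightarrow> 'v) \<Rightarrow> ('e \<Rightarrow> real) \<Rightarrow> 'e set \<Rightarrow> ('v \<Rightarrow> real) \<Rightarrow> 'e list \<Rightarrow> 'e \<Rightarrow> real" where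
  "solver_flow V E src dst w T chi es = foldl (cyc_update E src dst w T) (tree_flow0 V E src dst T chi) es"

text \<open>Expectation over K i.i.d. draws e_1..e_K from p on E - T.\<close>
definition solver_exp :: "'e set \<Rightarrow> ('e \<Rightarrow> 'v) \<Rightarrow> ('e \<Rightarrow> 'v) \<Rightarrow> ('e \<Rightarrow> real) \<Rightarrow> 'e set \<Rightarrow> nat \<Rightarrow> ('e list \<Rightarrow> real) \<Rightarrow> real" where
  "solver_exp E src dst w T K X =
     (\<Sum>es\<in>{es. set es \<subseteq> E - T \<and> length es = K}.
        prod_list (map (cyc_prob E src dst w T) es) * X es)"

text \<open>Laplacian, matrices on V as functions, Moore-Penrose pseudoinverse via Penrose conditions.\<close>
definition laplacian :: "'e set \<Rightarrow> ('e \<Rightarrow> 'v) \<Rightarrow> ('e \<Rightarrow> 'v) \<Rightarrow> ('e \<Rightarrow> real) \<Rightarrow> 'v \<Rightarrow> 'v \<Rightarrow> real" where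
  "laplacian E src dst w a b = (\<Sum>e\<in>E. inc src dst e a * (1 / res w e) * inc src dst e b)"

definition matmul :: "'v set \<Rightarrow> ('v \<Rightarrow> 'v \<Rightarrow> real) \<Rightarrow> ('v \<Rightarrow> 'v \<Rightarrow> real) \<Rightarrow> 'v \<Rightarrow> 'v \<Rightarrow> real" where
  "matmul V A B a b = (\<Sum>c\<in>V. A a c * B c b)"

definition pinv :: "'v set \<Rightarrow> ('v \<Rightarrow> 'v \<Rightarrow> real) \<Rightarrow> 'v \<Rightarrow> 'v \<Rightarrow> real" where
  "pinv V A = (THE M. (\<forall>a b. a \<notin> V \<or> b \<notin> V \<longrightarrow> M a b = 0) \<and>
     (\<forall>a\<in>V. \<forall>b\<in>V.
        matmul V (matmul V A M) A a b = A a b \<and>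
        matmul V (matmul V M A) M a b = M a b \<and>
        matmul V A M a b = matmul V A M b a \<and>
        matmul V M A a b = matmul V M A b a))"

definition mvec :: "'v set \<Rightarrow> ('v \<Rightarrow> 'v \<Rightarrow> real) \<Rightarrow> ('v \<Rightarrow> real) \<Rightarrow> 'v \<Rightarrow> real" where
  "mvec V M x a = (\<Sum>b\<in>V. M a b * x b)"

definition mnorm :: "'v set \<Rightarrow> ('v \<Rightarrow> 'v \<Rightarrow> real) \<Rightarrow> ('v \<Rightarrow> real) \<Rightarrow> real" where
  "mnorm V M x = sqrt (\<Sum>a\<in>V. \<Sum>b\<in>V. x a * M a b * x b)"

end

theory Submission
  imports Defs "HOL-Library.Function_Algebras"
begin

section \<open>Walks\<close>

lemma adj_sym: "adj src dst F x y = adj src dst F y x"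
  unfolding adj_def by blast

lemma adj_mono: "adj src dst F x y \<Longrightarrow> F \<subseteq> G \<Longrightarrow> adj src dst G x y"
  unfolding adj_def by blast

lemma walk_Nil[simp]: "walk src dst F []"
  unfolding walk_def by simp

lemma walk_single[simp]: "walk src dst F [x]"
  unfolding walk_def by simp

lemma walk_Cons2[simp]:
  "walk src dst F (x # y # xs) \<longleftrightarrow> adj src dst F x y \<and> walk src dst F (y # xs)"
  unfolding walk_def
proof safe
  assume h: "\<forall>i. Suc i < length (x # y # xs) \<longrightarrow> adj src dst F ((x # y # xs) ! i) ((x # y # xs) ! Suc i)"
  show "adj src dst F x y" using h[rule_format, of 0] by simp
  fix i assume "Suc i < length (y # xs)"
  then show "adj src dst F ((y # xs) ! i) ((y # xs) ! Suc i)" using h[rule_format, of "Suc i"] by simp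
next
  fix i
  assume a: "adj src dst F x y"
    and h: "\<forall>i. Suc i < length (y # xs) \<longrightarrow> adj src dst F ((y # xs) ! i) ((y # xs) ! Suc i)"
    and i: "Suc i < length (x # y # xs)"
  show "adj src dst F ((x # y # xs) ! i) ((x # y # xs) ! Suc i)"
  proof (cases i)
    case 0 then show ?thesis using a by simp
  next
    case (Suc j) then show ?thesis using h[rule_format, of j] i by simp
  qed
qed

lemma walk_Cons:
  "walk src dst F (x # xs) \<longleftrightarrow> (xs = [] \<or> adj src dst F x (hd xs)) \<and> walk src dst F xs"
  by (cases xs) auto

lemma walk_append:
  "walk src dst F (xs @ ys) \<longleftrightarrow> walk src dst F xs \<and> walk src dst F ys \<and>
     (xs \<noteq> [] \<longrightarrow> ys \<noteq> [] \<longrightarrow> adj src dst F (last xs) (hd ys))"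
  by (induction xs) (auto simp: walk_Cons)

lemma walk_rev: "walk src dst F (rev xs) \<longleftrightarrow> walk src dst F xs"
proof (induction xs)
  case (Cons x xs)
  have "walk src dst F (rev (x # xs)) \<longleftrightarrow> walk src dst F (rev xs) \<and> (xs \<noteq> [] \<longrightarrow> adj src dst F (hd xs) x)"
    by (simp add: walk_append last_rev)
  also have "\<dots> \<longleftrightarrow> walk src dst F (x # xs)"
    using Cons adj_sym[of src dst F "hd xs" x] by (auto simp: walk_Cons)
  finally show ?case .
qed simp

lemma walk_mono: "walk src dst F xs \<Longrightarrow> F \<subseteq> G \<Longrightarrow> walk src dst G xs"
  unfolding walk_def by (meson adj_mono)

lemma walk_set:
  assumes "walk src dst F xs" "xs \<noteq> []" "hd xs \<in> V" "\<forall>e\<in>F. src e \<in> V \<and> dst e \<in> V"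
  shows "set xs \<subseteq> V"
  using assms
proof (induction xs rule: induct_list012)
  case (3 x y zs)
  have "adj src dst F x y" using 3 by simp
  then have "y \<in> V" using 3(6) unfolding adj_def by auto
  then have "set (y # zs) \<subseteq> V" using 3 by auto
  then show ?case using 3 by auto
qed auto

lemma walk_distinct:
  assumes "walk src dst F xs" "xs \<noteq> []"
  shows "\<exists>ys. ys \<noteq> [] \<and> hd ys = hd xs \<and> last ys = last xs \<and> distinct ys \<and> walk src dst F ys
              \<and> set ys \<subseteq> set xs"
  using assms
proof (induction "length xs" arbitrary: xs rule: less_induct)
  case less
  show ?case
  proof (cases "distinct xs")
    case True then show ?thesis using less by blast
  next
    case False
    then obtain as x bs cs where xs: "xs = as @ [x] @ bs @ [x] @ cs"
      using not_distinct_decomp by blast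
    define zs where "zs = as @ [x] @ cs"
    have "length zs < length xs" unfolding zs_def xs by simp
    moreover have "walk src dst F zs"
    proof -
      have w: "walk src dst F ((as @ [x] @ bs) @ (x # cs))" using less(2) unfolding xs by simp
      then have "walk src dst F (x # cs)" by (simp only: walk_append)
      moreover have "walk src dst F (as @ [x])" using w by (simp only: walk_append append_assoc[symmetric]) blast
      ultimately show ?thesis unfolding zs_def using walk_append[of src dst F "as @ [x]" cs]
        by (auto simp: walk_Cons)
    qed
    moreover have "zs \<noteq> []" unfolding zs_def by simp
    ultimately obtain ys where ys: "ys \<noteq> [] \<and> hd ys = hd zs \<and> last ys = last zs \<and> distinct ys
        \<and> walk src dst F ys \<and> set ys \<subseteq> set zs"
      using less(1) by blast
    have h1: "hd zs = hd xs" unfolding zs_def xs by (cases as) auto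
    have h2: "last zs = last xs" unfolding zs_def xs by (cases cs) auto
    have h3: "set zs \<subseteq> set xs" unfolding zs_def xs by auto
    show ?thesis using ys h1 h2 h3 by (intro exI[of _ ys]) auto
  qed
qed

lemma distinct_hd_last:
  assumes "distinct xs" "xs \<noteq> []" "hd xs = last xs"
  shows "xs = [hd xs]"
proof (cases xs)
  case (Cons y ys)
  show ?thesis
  proof (cases ys)
    case (Cons z zs)
    then have "last xs \<in> set ys" using \<open>xs = y # ys\<close> by simp
    then show ?thesis using assms \<open>xs = y # ys\<close> by simp
  qed (use Cons in simp)
qed (use assms in simp)



definition treeG :: "'v set \<Rightarrow> 'e set \<Rightarrow> ('e \<Rightarrow> 'v) \<Rightarrow> ('e \<Rightarrow> 'v) \<Rightarrow> bool" where
  "treeG V F src dst \<longleftrightarrow> finite V \<and> finite F \<and> V \<noteq> {} \<and>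
     (\<forall>e\<in>F. src e \<in> V \<and> dst e \<in> V \<and> src e \<noteq> dst e) \<and>
     connected_on src dst V F \<and> card F = card V - 1"

lemma card_filter_sum:
  assumes "finite A"
  shows "card {x\<in>A. P x} = (\<Sum>x\<in>A. if P x then 1 else 0)"
proof -
  have "card {x\<in>A. P x} = (\<Sum>x\<in>{x\<in>A. P x}. 1)" by simp
  also have "\<dots> = (\<Sum>x\<in>A. if P x then 1 else 0)" using assms by (rule sum.inter_filter)
  finally show ?thesis .
qed

lemma degree_sum:
  assumes "finite V" "finite F" "\<forall>e\<in>F. src e \<in> V \<and> dst e \<in> V \<and> src e \<noteq> dst e"
  shows "(\<Sum>v\<in>V. card {e\<in>F. src e = v \<or> dst e = v}) = 2 * card F"
proof -
  have "(\<Sum>v\<in>V. card {e\<in>F. src e = v \<or> dst e = v})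
      = (\<Sum>v\<in>V. \<Sum>e\<in>F. if src e = v \<or> dst e = v then 1 else 0)"
    using assms by (simp add: card_filter_sum)
  also have "\<dots> = (\<Sum>e\<in>F. \<Sum>v\<in>V. if src e = v \<or> dst e = v then 1 else 0)"
    by (rule sum.swap)
  also have "\<dots> = (\<Sum>e\<in>F. 2)"
  proof (rule sum.cong[OF refl])
    fix e assume e: "e \<in> F"
    have "(\<Sum>v\<in>V. if src e = v \<or> dst e = v then 1 else 0) = card {v\<in>V. src e = v \<or> dst e = v}"
      using assms by (simp add: card_filter_sum)
    also have "{v\<in>V. src e = v \<or> dst e = v} = {src e, dst e}" using assms e by auto
    also have "card {src e, dst e} = 2" using assms e by auto
    finally show "(\<Sum>v\<in>V. if src e = v \<or> dst e = v then (1::nat) else 0) = 2" .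
  qed
  finally show ?thesis by simp
qed

lemma adj_leaf:
  assumes "adj src dst F x l" "\<forall>e'\<in>F. src e' = l \<or> dst e' = l \<longrightarrow> e' = e" "src e \<noteq> dst e"
  shows "x = (if src e = l then dst e else src e)"
  using assms unfolding adj_def by auto

lemma walk_avoid:
  assumes "walk src dst F ys" "l \<notin> set ys" "src e = l \<or> dst e = l"
  shows "walk src dst (F - {e}) ys"
  unfolding walk_def
proof (intro allI impI)
  fix i assume i: "Suc i < length ys"
  then have "adj src dst F (ys ! i) (ys ! Suc i)" using assms(1) unfolding walk_def by blast
  then obtain e' where e': "e' \<in> F" "(src e' = ys ! i \<and> dst e' = ys ! Suc i) \<or> (src e' = ys ! Suc i \<and> dst e' = ys ! i)"
    unfolding adj_def by blast
  have "ys ! i \<in> set ys" "ys ! Suc i \<in> set ys" using i by auto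
  then have "e' \<noteq> e" using e' assms(2,3) by auto
  then show "adj src dst (F - {e}) (ys ! i) (ys ! Suc i)" using e' unfolding adj_def by blast
qed

lemma leaf_in_walk:
  assumes "walk src dst F zs" "distinct zs" "l \<in> set zs"
    "\<forall>e'\<in>F. src e' = l \<or> dst e' = l \<longrightarrow> e' = e" "src e \<noteq> dst e"
  shows "hd zs = l \<or> last zs = l"
proof -
  obtain i where i: "i < length zs" "zs ! i = l" using assms(3) by (metis in_set_conv_nth)
  have ne: "zs \<noteq> []" using assms(3) by auto
  show ?thesis
  proof (cases "i = 0")
    case True then show ?thesis using i ne by (simp add: hd_conv_nth)
  next
    case False
    show ?thesis
    proof (cases "Suc i = length zs")
      case True
      then have "length zs - 1 = i" by simp
      then show ?thesis using i ne by (simp add: last_conv_nth)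
    next
      case False2: False
      obtain j where j: "i = Suc j" using False by (cases i) auto
      have a1: "adj src dst F (zs ! j) l" using assms(1) i j unfolding walk_def by auto
      have a2: "adj src dst F (zs ! Suc i) l"
        using assms(1) i False2 unfolding walk_def by (metis Suc_lessI adj_sym)
      have "zs ! j = zs ! Suc i"
        using adj_leaf[OF a1 assms(4,5)] adj_leaf[OF a2 assms(4,5)] by simp
      moreover have "Suc i < length zs" using i False2 by simp
      ultimately have "j = Suc i" using assms(2) i j by (simp add: nth_eq_iff_index_eq)
      then show ?thesis using j by simp
    qed
  qed
qed

lemma tree_leaf:
  assumes t: "treeG V F src dst" and c2: "2 \<le> card V"
  shows "\<exists>l e. l \<in> V \<and> e \<in> F \<and> (src e = l \<or> dst e = l) \<and>
     (\<forall>e'\<in>F. src e' = l \<or> dst e' = l \<longrightarrow> e' = e) \<and> treeG (V - {l}) (F - {e}) src dst"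
proof -
  have fin: "finite V" "finite F" and ends: "\<forall>e\<in>F. src e \<in> V \<and> dst e \<in> V \<and> src e \<noteq> dst e"
    and conn: "connected_on src dst V F" and cardF: "card F = card V - 1"
    using t unfolding treeG_def by auto
  define deg where "deg v = card {e\<in>F. src e = v \<or> dst e = v}" for v
  have ds: "(\<Sum>v\<in>V. deg v) = 2 * card F" unfolding deg_def using degree_sum[OF fin ends] .
  obtain l where l: "l \<in> V" "deg l \<le> 1"
  proof -
    { assume "\<forall>v\<in>V. 2 \<le> deg v"
      then have "(\<Sum>v\<in>V. (2::nat)) \<le> (\<Sum>v\<in>V. deg v)" by (intro sum_mono) auto
      then have "2 * card V \<le> 2 * card F" using ds by simp
      then have False using cardF c2 by simp }
    then show ?thesis using that by force
  qed
  obtain b where b: "b \<in> V" "b \<noteq> l"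
  proof -
    { assume "\<forall>b\<in>V. b = l"
      then have "V \<subseteq> {l}" by auto
      then have "card V \<le> 1" using card_mono[of "{l}" V] by simp
      then have False using c2 by simp }
    then show ?thesis using that by blast
  qed
  obtain xs where xs: "xs \<noteq> []" "hd xs = l" "last xs = b" "walk src dst F xs"
    using conn l(1) b(1) unfolding connected_on_def by blast
  obtain y ys where xs2: "xs = l # y # ys"
    using xs b(2) by (cases xs; cases "tl xs") auto
  have "adj src dst F l y" using xs(4) xs2 by simp
  then obtain e where e: "e \<in> F" "src e = l \<or> dst e = l" unfolding adj_def by auto
  have degl: "{e'\<in>F. src e' = l \<or> dst e' = l} = {e}"
  proof -
    have "finite {e'\<in>F. src e' = l \<or> dst e' = l}" using fin by simp
    moreover have "card {e'\<in>F. src e' = l \<or> dst e' = l} \<le> Suc 0" using l(2) unfolding deg_def by simp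
    moreover have "e \<in> {e'\<in>F. src e' = l \<or> dst e' = l}" using e by simp
    ultimately show ?thesis using card_le_Suc0_iff_eq by blast
  qed
  then have uniq: "\<forall>e'\<in>F. src e' = l \<or> dst e' = l \<longrightarrow> e' = e" by blast
  have se: "src e \<noteq> dst e" using ends e by auto
  have "treeG (V - {l}) (F - {e}) src dst"
    unfolding treeG_def
  proof (intro conjI)
    show "finite (V - {l})" "finite (F - {e})" using fin by auto
    show "V - {l} \<noteq> {}" using b by auto
    show "\<forall>e'\<in>F - {e}. src e' \<in> V - {l} \<and> dst e' \<in> V - {l} \<and> src e' \<noteq> dst e'"
      using ends uniq by auto
    show "card (F - {e}) = card (V - {l}) - 1"
      using cardF e l(1) fin by (simp add: card_Diff_singleton)
    show "connected_on src dst (V - {l}) (F - {e})"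
      unfolding connected_on_def
    proof (intro ballI)
      fix a c assume a: "a \<in> V - {l}" and c: "c \<in> V - {l}"
      obtain zs where zs: "zs \<noteq> []" "hd zs = a" "last zs = c" "walk src dst F zs"
        using conn a c unfolding connected_on_def by blast
      obtain qs where qs: "qs \<noteq> []" "hd qs = a" "last qs = c" "distinct qs" "walk src dst F qs"
        using walk_distinct[OF zs(4,1)] zs by auto
      have "l \<notin> set qs"
        using leaf_in_walk[OF qs(5) qs(4) _ uniq se] qs a c by auto
      then have "walk src dst (F - {e}) qs" using walk_avoid[OF qs(5) _ e(2)] by blast
      then show "\<exists>xs. xs \<noteq> [] \<and> hd xs = a \<and> last xs = c \<and> walk src dst (F - {e}) xs"
        using qs by blast
    qed
  qed
  then show ?thesis using l(1) e uniq by blast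
qed

lemma treeG_card1:
  assumes "treeG V F src dst" "\<not> 2 \<le> card V"
  shows "\<exists>a. V = {a}" "F = {}"
proof -
  have "finite V" "V \<noteq> {}" "finite F" "card F = card V - 1" using assms unfolding treeG_def by auto
  moreover have "0 < card V" using \<open>finite V\<close> \<open>V \<noteq> {}\<close> by (simp add: card_gt_0_iff)
  ultimately have "card V = 1" using assms(2) by linarith
  then show "\<exists>a. V = {a}" by (simp add: card_1_singleton_iff)
  show "F = {}" using \<open>card V = 1\<close> \<open>card F = card V - 1\<close> \<open>finite F\<close> by simp
qed

lemma tree_path_unique:
  assumes "treeG V F src dst" "walk src dst F xs" "walk src dst F ys" "distinct xs" "distinct ys"
    "xs \<noteq> []" "ys \<noteq> []" "hd xs = hd ys" "last xs = last ys" "hd xs \<in> V"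
  shows "xs = ys"
  using assms
proof (induction "card V" arbitrary: V F xs ys rule: less_induct)
  case less
  have ends: "\<forall>e\<in>F. src e \<in> V \<and> dst e \<in> V" using less(2) unfolding treeG_def by auto
  show ?case
  proof (cases "2 \<le> card V")
    case False
    obtain a where V: "V = {a}" using treeG_card1[OF less(2) False] by blast
    have sx: "set xs \<subseteq> V" using walk_set[OF less(3) less(7) less(11) ends] .
    have sy: "set ys \<subseteq> V" using walk_set[OF less(4) less(8)] less(9) less(11) ends by simp
    have "length xs = 1"
      using distinct_card[OF less(5)] card_mono[OF _ sx] V less(7) by (cases xs) auto
    moreover have "length ys = 1"
      using distinct_card[OF less(6)] card_mono[OF _ sy] V less(8) by (cases ys) auto
    ultimately show ?thesis using less(9) by (cases xs; cases ys) auto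
  next
    case True
    obtain l e where le: "l \<in> V" "e \<in> F" "src e = l \<or> dst e = l"
      and uniq: "\<forall>e'\<in>F. src e' = l \<or> dst e' = l \<longrightarrow> e' = e"
      and t': "treeG (V - {l}) (F - {e}) src dst"
      using tree_leaf[OF less(2) True] by blast
    have se: "src e \<noteq> dst e" using less(2) le unfolding treeG_def by auto
    have fin: "finite V" using less(2) unfolding treeG_def by auto
    have cless: "card (V - {l}) < card V" using card_Diff1_less[OF fin(1) le(1)] .
    define u where "u = (if src e = l then dst e else src e)"
    have uV: "u \<in> V - {l}" using ends le se unfolding u_def by auto
    have H: "zs1 = zs2" if z: "walk src dst F zs1" "walk src dst F zs2" "distinct zs1" "distinct zs2"
       "zs1 \<noteq> []" "zs2 \<noteq> []" "hd zs1 = l" "hd zs2 = l" "last zs1 = last zs2" for zs1 zs2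
    proof (cases "last zs1 = l")
      case True
      then show ?thesis using distinct_hd_last[of zs1] distinct_hd_last[of zs2] z by metis
    next
      case False
      obtain zs1' where z1: "zs1 = l # zs1'" using z(5,7) by (cases zs1) auto
      obtain zs2' where z2: "zs2 = l # zs2'" using z(6,8) by (cases zs2) auto
      have n1: "zs1' \<noteq> []" using False z1 by auto
      have n2: "zs2' \<noteq> []" using False z(9) z2 by auto
      have w1: "walk src dst F zs1'" "adj src dst F l (hd zs1')" using z(1) z1 n1 by (auto simp: walk_Cons)
      have w2: "walk src dst F zs2'" "adj src dst F l (hd zs2')" using z(2) z2 n2 by (auto simp: walk_Cons)
      have h1: "hd zs1' = u" using adj_leaf[OF w1(2)[unfolded adj_sym[of _ _ _ l]] uniq se] unfolding u_def .
      have h2: "hd zs2' = u" using adj_leaf[OF w2(2)[unfolded adj_sym[of _ _ _ l]] uniq se] unfolding u_def .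
      have nl1: "l \<notin> set zs1'" using z(3) z1 by simp
      have nl2: "l \<notin> set zs2'" using z(4) z2 by simp
      have "zs1' = zs2'"
        apply (rule less(1)[OF cless t' walk_avoid[OF w1(1) nl1 le(3)] walk_avoid[OF w2(1) nl2 le(3)]])
        using z z1 z2 n1 n2 h1 h2 uV by auto
      then show ?thesis using z1 z2 by simp
    qed
    show ?thesis
    proof (cases "l \<in> set xs \<or> l \<in> set ys")
      case True
      then have "hd xs = l \<or> last xs = l"
        using leaf_in_walk[OF less(3) less(5) _ uniq se] leaf_in_walk[OF less(4) less(6) _ uniq se]
          less(9,10) by auto
      then show ?thesis
      proof
        assume "hd xs = l" then show ?thesis using H[of xs ys] less by auto
      next
        assume lx: "last xs = l"
        have "rev xs = rev ys"
          by (rule H) (use less lx in \<open>auto simp: walk_rev hd_rev last_rev\<close>)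
        then show ?thesis by simp
      qed
    next
      case False
      have "hd xs \<in> V - {l}" using False less(11) less(7) by (cases xs) auto
      then show ?thesis
        using less(1)[OF cless t' walk_avoid[OF less(3) _ le(3)] walk_avoid[OF less(4) _ le(3)]] less False
        by auto
    qed
  qed
qed

lemma tree_circ_zero:
  assumes "treeG V F src dst" "\<forall>c\<in>V. (\<Sum>e\<in>F. inc src dst e c * g e) = 0" "e \<in> F"
  shows "g e = 0"
  using assms
proof (induction "card V" arbitrary: V F e rule: less_induct)
  case less
  show ?case
  proof (cases "2 \<le> card V")
    case False
    then show ?thesis using treeG_card1(2)[OF less(2) False] less(4) by simp
  next
    case True
    obtain l e0 where le: "l \<in> V" "e0 \<in> F" "src e0 = l \<or> dst e0 = l"
      and uniq: "\<forall>e'\<in>F. src e' = l \<or> dst e' = l \<longrightarrow> e' = e0"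
      and t': "treeG (V - {l}) (F - {e0}) src dst"
      using tree_leaf[OF less(2) True] by blast
    have se: "src e0 \<noteq> dst e0" using less(2) le unfolding treeG_def by auto
    have fin: "finite V" "finite F" using less(2) unfolding treeG_def by auto
    have cless: "card (V - {l}) < card V" using card_Diff1_less[OF fin(1) le(1)] .
    have "(\<Sum>e\<in>F. inc src dst e l * g e) = inc src dst e0 l * g e0 + (\<Sum>e\<in>F - {e0}. inc src dst e l * g e)"
      using fin le(2) by (simp add: sum.remove)
    also have "(\<Sum>e\<in>F - {e0}. inc src dst e l * g e) = 0"
      using uniq by (intro sum.neutral) (auto simp: inc_def)
    finally have "inc src dst e0 l * g e0 = 0" using less(3) le(1) by simp
    moreover have "inc src dst e0 l \<noteq> 0" using le(3) se by (auto simp: inc_def)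
    ultimately have g0: "g e0 = 0" by simp
    show ?thesis
    proof (cases "e = e0")
      case True then show ?thesis using g0 by simp
    next
      case False
      have "\<forall>c\<in>V - {l}. (\<Sum>e\<in>F - {e0}. inc src dst e c * g e) = 0"
      proof
        fix c assume c: "c \<in> V - {l}"
        have "(\<Sum>e\<in>F. inc src dst e c * g e) = inc src dst e0 c * g e0 + (\<Sum>e\<in>F - {e0}. inc src dst e c * g e)"
          using fin le(2) by (simp add: sum.remove)
        then show "(\<Sum>e\<in>F - {e0}. inc src dst e c * g e) = 0" using less(3) c g0 by simp
      qed
      then show ?thesis using less(1)[OF cless t'] less(4) False by auto
    qed
  qed
qed

lemma tree_path_ex1:
  assumes "treeG V F src dst" "a \<in> V" "b \<in> V"
  shows "\<exists>!xs. xs \<noteq> [] \<and> hd xs = a \<and> last xs = b \<and> distinct xs \<and> walk src dst F xs"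
proof -
  obtain zs where zs: "zs \<noteq> []" "hd zs = a" "last zs = b" "walk src dst F zs"
    using assms unfolding treeG_def connected_on_def by blast
  obtain qs where qs: "qs \<noteq> []" "hd qs = a" "last qs = b" "distinct qs" "walk src dst F qs"
    using walk_distinct[OF zs(4,1)] zs by auto
  show ?thesis
  proof (rule ex1I[of _ qs])
    show "qs \<noteq> [] \<and> hd qs = a \<and> last qs = b \<and> distinct qs \<and> walk src dst F qs" using qs by blast
    fix ys assume "ys \<noteq> [] \<and> hd ys = a \<and> last ys = b \<and> distinct ys \<and> walk src dst F ys"
    then show "ys = qs" using tree_path_unique[OF assms(1), of ys qs] qs assms by auto
  qed
qed



lemma sum_fun_apply: "(\<Sum>i\<in>I. (F i :: 'a \<Rightarrow> 'b::comm_monoid_add)) x = (\<Sum>i\<in>I. F i x)"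
  by (induction I rule: infinite_finite_induct) auto

lemma inj_imp_surj:
  fixes A :: "'v \<Rightarrow> 'v \<Rightarrow> real" and y :: "'v \<Rightarrow> real"
  assumes fin: "finite V"
    and inj: "\<forall>x. (\<forall>a\<in>V. (\<Sum>b\<in>V. A a b * x b) = 0) \<longrightarrow> (\<forall>a\<in>V. x a = 0)"
  shows "\<exists>x. \<forall>a\<in>V. (\<Sum>b\<in>V. A a b * x b) = y a"
proof -
  interpret vs: vector_space "\<lambda>(c::real) (f::'v\<Rightarrow>real). (\<lambda>x. c * f x)"
    by unfold_locales (auto simp: fun_eq_iff algebra_simps)
  define \<delta> where "\<delta> b = (\<lambda>a::'v. if a = b then 1 else 0 :: real)" for b
  define col where "col b = (\<lambda>a::'v. if a \<in> V then A a b else 0)" for b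
  define D where "D = \<delta> ` V"
  define C where "C = col ` V"
  define y' where "y' = (\<lambda>a. if a \<in> V then y a else 0)"
  have spanD: "z \<in> vs.span D" if z: "\<forall>a. a \<notin> V \<longrightarrow> z a = 0" for z
  proof -
    have "(\<Sum>b\<in>V. (\<lambda>x. z b * \<delta> b x)) \<in> vs.span D"
      by (intro vs.span_sum vs.span_scale vs.span_base) (auto simp: D_def)
    moreover have "(\<Sum>b\<in>V. (\<lambda>x. z b * \<delta> b x)) = z"
    proof
      fix a
      show "(\<Sum>b\<in>V. (\<lambda>x. z b * \<delta> b x)) a = z a"
      proof -
        have "(\<Sum>b\<in>V. (\<lambda>x. z b * \<delta> b x)) a = (\<Sum>b\<in>V. if a = b then z b else 0)"
          unfolding sum_fun_apply \<delta>_def by (intro sum.cong) auto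
        also have "\<dots> = z a" using fin z by (simp add: sum.delta)
        finally show ?thesis .
      qed
    qed
    ultimately show ?thesis by simp
  qed
  have colinj: "inj_on col V"
  proof (rule inj_onI)
    fix b1 b2 assume b: "b1 \<in> V" "b2 \<in> V" "col b1 = col b2"
    define x where "x = (\<lambda>c. \<delta> b1 c - \<delta> b2 c)"
    have "\<forall>a\<in>V. (\<Sum>b\<in>V. A a b * x b) = 0"
    proof
      fix a assume a: "a \<in> V"
      have "(\<Sum>b\<in>V. A a b * x b) = (\<Sum>b\<in>V. (if b = b1 then A a b else 0) - (if b = b2 then A a b else 0))"
        unfolding x_def \<delta>_def by (intro sum.cong) auto
      also have "\<dots> = A a b1 - A a b2" using fin b by (simp add: sum_subtractf)
      also have "\<dots> = col b1 a - col b2 a" using a by (simp add: col_def)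
      finally show "(\<Sum>b\<in>V. A a b * x b) = 0" using b by simp
    qed
    then have "x b1 = 0" using inj b by blast
    then show "b1 = b2" unfolding x_def \<delta>_def by (auto split: if_splits)
  qed
  have reidx: "(\<Sum>v\<in>t. u v * v a) = (\<Sum>b\<in>V. A a b * (if col b \<in> t then u (col b) else 0))"
    if t: "t \<subseteq> C" and a: "a \<in> V" for t u a
  proof -
    define B where "B = {b\<in>V. col b \<in> t}"
    have tB: "t = col ` B" using t unfolding B_def C_def by auto
    have ib: "inj_on col B" using colinj unfolding B_def by (auto intro: inj_on_subset)
    have "(\<Sum>v\<in>t. u v * v a) = (\<Sum>b\<in>B. u (col b) * col b a)"
      unfolding tB by (simp add: sum.reindex[OF ib])
    also have "\<dots> = (\<Sum>b\<in>B. A a b * u (col b))" using a by (simp add: col_def mult.commute)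
    also have "\<dots> = (\<Sum>b\<in>V. if col b \<in> t then A a b * u (col b) else 0)"
      using fin unfolding B_def by (rule sum.inter_filter)
    also have "\<dots> = (\<Sum>b\<in>V. A a b * (if col b \<in> t then u (col b) else 0))"
      by (intro sum.cong) (auto simp: B_def)
    finally show ?thesis .
  qed
  have indC: "vs.independent C"
  proof
    assume "vs.dependent C"
    then obtain t u where tu: "finite t" "t \<subseteq> C" "(\<Sum>v\<in>t. (\<lambda>x. u v * v x)) = 0" "\<exists>v\<in>t. u v \<noteq> 0"
      unfolding vs.dependent_explicit by blast
    define x where "x b = (if col b \<in> t then u (col b) else 0)" for b
    have "\<forall>a\<in>V. (\<Sum>b\<in>V. A a b * x b) = 0"
    proof
      fix a assume a: "a \<in> V"
      have "(\<Sum>b\<in>V. A a b * x b) = (\<Sum>v\<in>t. u v * v a)" unfolding x_def using reidx[OF tu(2) a] by simp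
      also have "\<dots> = (\<Sum>v\<in>t. (\<lambda>x. u v * v x)) a" by (simp add: sum_fun_apply)
      finally show "(\<Sum>b\<in>V. A a b * x b) = 0" using tu(3) by simp
    qed
    then have x0: "\<forall>a\<in>V. x a = 0" using inj by blast
    obtain v where v: "v \<in> t" "u v \<noteq> 0" using tu(4) by blast
    obtain b where b: "b \<in> V" "v = col b" using v tu(2) unfolding C_def by blast
    show False using x0 b v unfolding x_def by auto
  qed
  have "y' \<in> vs.span C"
  proof (rule ccontr)
    assume ny: "y' \<notin> vs.span C"
    have ind: "vs.independent (insert y' C)" by (rule vs.independent_insertI[OF ny indC])
    have sub: "insert y' C \<subseteq> vs.span D"
      using spanD by (auto simp: C_def col_def y'_def)
    have "finite D" using fin by (simp add: D_def)
    from vs.independent_span_bound[OF this ind sub]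
    have "card (insert y' C) \<le> card D" by simp
    moreover have "card D \<le> card V" using fin by (simp add: D_def card_image_le)
    moreover have "card C = card V" using colinj by (simp add: C_def card_image)
    moreover have "y' \<notin> C" using ny vs.span_base by blast
    moreover have "finite C" using fin by (simp add: C_def)
    ultimately show False by simp
  qed
  then obtain t r where tr: "finite t" "t \<subseteq> C" "y' = (\<Sum>v\<in>t. (\<lambda>x. r v * v x))"
    unfolding vs.span_explicit by blast
  define x where "x b = (if col b \<in> t then r (col b) else 0)" for b
  show ?thesis
  proof (intro exI[of _ x] ballI)
    fix a assume a: "a \<in> V"
    have "(\<Sum>b\<in>V. A a b * x b) = (\<Sum>v\<in>t. r v * v a)" unfolding x_def using reidx[OF tr(2) a] by simp
    also have "\<dots> = y' a" unfolding tr(3) by (simp add: sum_fun_apply)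
    finally show "(\<Sum>b\<in>V. A a b * x b) = y a" using a by (simp add: y'_def)
  qed
qed



lemma inc_eq: "src e \<noteq> dst e \<Longrightarrow> inc src dst e c = (if c = src e then 1 else 0) - (if c = dst e then 1 else 0)"
  by (auto simp: inc_def)

locale ctx =
  fixes V :: "'v set" and E :: "'e set" and src dst :: "'e \<Rightarrow> 'v" and w :: "'e \<Rightarrow> real"
    and T :: "'e set" and s :: 'v and chi :: "'v \<Rightarrow> real"
  assumes G: "graph V E src dst" and C: "connected_on src dst V E" and W: "\<forall>e\<in>E. w e > 0"
    and ST: "spanning_tree V E src dst T" and sV: "s \<in> V" and chi0: "(\<Sum>a\<in>V. chi a) = 0"
    and NT: "E - T \<noteq> {}"
begin

lemma finV: "finite V" using G unfolding graph_def by auto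
lemma finE: "finite E" using G unfolding graph_def by auto
lemma ends: "e \<in> E \<Longrightarrow> src e \<in> V \<and> dst e \<in> V \<and> src e \<noteq> dst e" using G unfolding graph_def by auto
lemma TE: "T \<subseteq> E" using ST unfolding spanning_tree_def by auto
lemma finT: "finite T" using TE finE finite_subset by auto
lemma treeT: "treeG V T src dst"
  unfolding treeG_def using finV finT sV ends TE ST unfolding spanning_tree_def by auto

lemma res_pos: "e \<in> E \<Longrightarrow> res w e > 0" using W by (simp add: res_def)
lemma w_res:
  assumes "e \<in> E" shows "w e * res w e = 1"
proof -
  have "w e \<noteq> 0" using W assms by force
  then show ?thesis by (simp add: res_def)
qed
lemma inv_res: "1 / res w e = w e" by (simp add: res_def)

lemma path: "a \<in> V \<Longrightarrow> b \<in> V \<Longrightarrow>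
   tree_path src dst T a b \<noteq> [] \<and> hd (tree_path src dst T a b) = a \<and> last (tree_path src dst T a b) = b
   \<and> distinct (tree_path src dst T a b) \<and> walk src dst T (tree_path src dst T a b)"
  unfolding tree_path_def by (rule theI'[OF tree_path_ex1[OF treeT]])

lemma divT:
  assumes "\<forall>e. e \<notin> T \<longrightarrow> f e = 0"
  shows "(\<Sum>e\<in>E. inc src dst e c * f e) = (\<Sum>e\<in>T. inc src dst e c * f e)"
  by (rule sum.mono_neutral_right[OF finE TE]) (use assms in auto)

lemma Tflow_unique:
  assumes "\<forall>e. e \<notin> T \<longrightarrow> f e = 0" "\<forall>e. e \<notin> T \<longrightarrow> g e = 0"
    "\<forall>c\<in>V. (\<Sum>e\<in>E. inc src dst e c * f e) = (\<Sum>e\<in>E. inc src dst e c * g e)"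
  shows "f = g"
proof
  fix e
  show "f e = g e"
  proof (cases "e \<in> T")
    case False then show ?thesis using assms by simp
  next
    case True
    have "\<forall>c\<in>V. (\<Sum>e\<in>T. inc src dst e c * (f e - g e)) = 0"
    proof
      fix c assume c: "c \<in> V"
      have "(\<Sum>e\<in>T. inc src dst e c * (f e - g e)) = (\<Sum>e\<in>T. inc src dst e c * f e) - (\<Sum>e\<in>T. inc src dst e c * g e)"
        by (simp add: algebra_simps sum_subtractf)
      also have "\<dots> = 0" using assms(3) c divT[OF assms(1)] divT[OF assms(2)] by simp
      finally show "(\<Sum>e\<in>T. inc src dst e c * (f e - g e)) = 0" .
    qed
    then have "f e - g e = 0" using tree_circ_zero[OF treeT, of "\<lambda>e. f e - g e"] True by blast
    then show ?thesis by simp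
  qed
qed

lemma noparallel:
  assumes "e1 \<in> T" "e2 \<in> T" "(src e1 = src e2 \<and> dst e1 = dst e2) \<or> (src e1 = dst e2 \<and> dst e1 = src e2)"
  shows "e1 = e2"
proof (rule ccontr)
  assume ne: "e1 \<noteq> e2"
  have s1: "src e1 \<noteq> dst e1" "src e2 \<noteq> dst e2" using ends assms(1,2) TE by auto
  define \<sigma> where "\<sigma> = (if src e1 = src e2 then -1 else (1::real))"
  define g where "g e = (if e = e1 then 1 else if e = e2 then \<sigma> else 0)" for e
  have "\<forall>c\<in>V. (\<Sum>e\<in>T. inc src dst e c * g e) = 0"
  proof
    fix c assume "c \<in> V"
    have "(\<Sum>e\<in>T. inc src dst e c * g e) = (\<Sum>e\<in>T. (if e = e1 then inc src dst e1 c else 0) + (if e = e2 then \<sigma> * inc src dst e2 c else 0))"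
      unfolding g_def using ne by (intro sum.cong) auto
    also have "\<dots> = inc src dst e1 c + \<sigma> * inc src dst e2 c"
      using finT assms(1,2) by (simp add: sum.distrib sum.delta)
    also have "\<dots> = 0" using assms(3) s1 unfolding \<sigma>_def by (auto simp: inc_def)
    finally show "(\<Sum>e\<in>T. inc src dst e c * g e) = 0" .
  qed
  then have "g e1 = 0" using tree_circ_zero[OF treeT] assms(1) by blast
  then show False unfolding g_def by simp
qed

lemma tf_out: "e \<notin> T \<Longrightarrow> tree_flow src dst T a b e = 0"
  by (simp add: tree_flow_def)

lemma tf_div:
  assumes a: "a \<in> V" and b: "b \<in> V"
  shows "(\<Sum>e\<in>E. inc src dst e c * tree_flow src dst T a b e) = (if c = a then 1 else 0) - (if c = b then 1 else 0)"
proof -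
  define p where "p = tree_path src dst T a b"
  define n where "n = length p"
  have P: "p \<noteq> []" "hd p = a" "last p = b" "distinct p" "walk src dst T p"
    using path[OF a b] unfolding p_def by auto
  define st where "st i e = (if src e = p ! i \<and> dst e = p ! Suc i then 1
      else if src e = p ! Suc i \<and> dst e = p ! i then -1 else (0::real))" for i e
  have tf: "tree_flow src dst T a b e = (if e \<in> T then \<Sum>i<n-1. st i e else 0)" for e
    unfolding tree_flow_def Let_def p_def[symmetric] n_def st_def by simp
  define gg where "gg i = (if c = p ! i then 1 else (0::real))" for i
  have step: "(\<Sum>e\<in>T. inc src dst e c * st i e) = gg i - gg (Suc i)" if i: "i < n - 1" for i
  proof -
    have si: "Suc i < length p" using i n_def by simp
    have "adj src dst T (p ! i) (p ! Suc i)" using P(5) si unfolding walk_def by blast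
    then obtain e0 where e0: "e0 \<in> T" "(src e0 = p ! i \<and> dst e0 = p ! Suc i) \<or> (src e0 = p ! Suc i \<and> dst e0 = p ! i)"
      unfolding adj_def by blast
    have neq: "p ! i \<noteq> p ! Suc i" using P(4) si by (simp add: nth_eq_iff_index_eq)
    have "(\<Sum>e\<in>T. inc src dst e c * st i e) = inc src dst e0 c * st i e0 + (\<Sum>e\<in>T - {e0}. inc src dst e c * st i e)"
      using finT e0(1) by (simp add: sum.remove)
    also have "(\<Sum>e\<in>T - {e0}. inc src dst e c * st i e) = 0"
    proof (rule sum.neutral, rule ballI)
      fix e assume e: "e \<in> T - {e0}"
      have "st i e = 0"
      proof (rule ccontr)
        assume "st i e \<noteq> 0"
        then have "(src e = p ! i \<and> dst e = p ! Suc i) \<or> (src e = p ! Suc i \<and> dst e = p ! i)"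
          unfolding st_def by (auto split: if_splits)
        then have "e = e0" using noparallel[of e e0] e e0 by auto
        then show False using e by simp
      qed
      then show "inc src dst e c * st i e = 0" by simp
    qed
    also have "inc src dst e0 c * st i e0 = gg i - gg (Suc i)"
      using e0(2) neq unfolding st_def gg_def inc_def by auto
    finally show ?thesis by simp
  qed
  have "(\<Sum>e\<in>E. inc src dst e c * tree_flow src dst T a b e) = (\<Sum>e\<in>E. if e \<in> T then inc src dst e c * (\<Sum>i<n-1. st i e) else 0)"
    unfolding tf by (intro sum.cong) auto
  also have "\<dots> = (\<Sum>e\<in>E \<inter> T. inc src dst e c * (\<Sum>i<n-1. st i e))"
    by (rule sum.inter_restrict[OF finE, symmetric])
  also have "E \<inter> T = T" using TE by auto
  also have "(\<Sum>e\<in>T. inc src dst e c * (\<Sum>i<n-1. st i e)) = (\<Sum>i<n-1. \<Sum>e\<in>T. inc src dst e c * st i e)"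
    by (simp add: sum_distrib_left sum.swap[of _ T])
  also have "\<dots> = (\<Sum>i<n-1. gg i - gg (Suc i))" by (intro sum.cong) (auto simp: step)
  also have "\<dots> = gg 0 - gg (n - 1)" by (rule sum_lessThan_telescope')
  also have "gg 0 = (if c = a then 1 else 0)" using P unfolding gg_def by (simp add: hd_conv_nth)
  also have "gg (n - 1) = (if c = b then 1 else 0)" using P unfolding gg_def n_def by (simp add: last_conv_nth)
  finally show ?thesis .
qed

lemma tf_support:
  assumes "tree_flow src dst T a b e \<noteq> 0"
  shows "e \<in> path_edges src dst T a b"
proof -
  define p where "p = tree_path src dst T a b"
  have eT: "e \<in> T" using assms tf_out by blast
  define st where "st i = (if src e = p ! i \<and> dst e = p ! Suc i then 1
      else if src e = p ! Suc i \<and> dst e = p ! i then -1 else (0::real))" for i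
  have ne: "(\<Sum>i<length p - 1. st i) \<noteq> 0"
    using assms eT unfolding tree_flow_def Let_def p_def st_def by simp
  have "\<exists>i\<in>{..<length p - 1}. st i \<noteq> 0"
  proof (rule ccontr)
    assume "\<not> (\<exists>i\<in>{..<length p - 1}. st i \<noteq> 0)"
    then have "(\<Sum>i<length p - 1. st i) = 0" by (intro sum.neutral) blast
    then show False using ne by simp
  qed
  then obtain i where i: "i < length p - 1" "st i \<noteq> 0" by blast
  have "(src e = p ! i \<and> dst e = p ! Suc i) \<or> (src e = p ! Suc i \<and> dst e = p ! i)"
    using i(2) unfolding st_def by (auto split: if_splits)
  moreover have "Suc i < length p" using i(1) by simp
  ultimately show ?thesis unfolding path_edges_def Let_def p_def[symmetric] using eT by blast
qed

lemma tf_abs: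
  assumes a: "a \<in> V" and b: "b \<in> V"
  shows "\<bar>tree_flow src dst T a b e\<bar> \<le> 1"
proof (cases "e \<in> T")
  case False then show ?thesis by (simp add: tf_out)
next
  case True
  define p where "p = tree_path src dst T a b"
  have P: "distinct p" using path[OF a b] unfolding p_def by auto
  define st where "st i = (if src e = p ! i \<and> dst e = p ! Suc i then 1
      else if src e = p ! Suc i \<and> dst e = p ! i then -1 else (0::real))" for i
  have tf: "tree_flow src dst T a b e = (\<Sum>i<length p - 1. st i)"
    unfolding tree_flow_def Let_def p_def[symmetric] st_def using True by simp
  define I where "I = {i\<in>{..<length p - 1}. st i \<noteq> 0}"
  have "(\<Sum>i<length p - 1. st i) = (\<Sum>i\<in>I. st i)"
    unfolding I_def by (rule sum.mono_neutral_right) auto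
  also have "\<bar>\<dots>\<bar> \<le> (\<Sum>i\<in>I. \<bar>st i\<bar>)" by (rule sum_abs)
  also have "\<dots> \<le> (\<Sum>i\<in>I. 1)" by (intro sum_mono) (auto simp: st_def)
  also have "\<dots> = card I" by simp
  also have "card I \<le> 1"
  proof -
    have "\<forall>i\<in>I. \<forall>j\<in>I. i = j"
    proof (intro ballI)
      fix i j assume i: "i \<in> I" and j: "j \<in> I"
      have il: "Suc i < length p" "Suc j < length p" using i j unfolding I_def by auto
      have ci: "(src e = p ! i \<and> dst e = p ! Suc i) \<or> (src e = p ! Suc i \<and> dst e = p ! i)"
        using i unfolding I_def st_def by (auto split: if_splits)
      have cj: "(src e = p ! j \<and> dst e = p ! Suc j) \<or> (src e = p ! Suc j \<and> dst e = p ! j)"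
        using j unfolding I_def st_def by (auto split: if_splits)
      have inj: "p ! x = p ! y \<Longrightarrow> x < length p \<Longrightarrow> y < length p \<Longrightarrow> x = y" for x y
        using P by (simp add: nth_eq_iff_index_eq)
      have "p ! i = p ! j \<or> p ! Suc i = p ! Suc j \<or> (p ! i = p ! Suc j \<and> p ! Suc i = p ! j)"
        using ci cj by auto
      then show "i = j"
      proof (elim disjE conjE)
        assume "p ! i = p ! j" then show "i = j" using inj il by simp
      next
        assume "p ! Suc i = p ! Suc j" then show "i = j" using inj[of "Suc i" "Suc j"] il by simp
      next
        assume "p ! i = p ! Suc j" "p ! Suc i = p ! j"
        then have "i = Suc j" "Suc i = j" using inj[of i "Suc j"] inj[of "Suc i" j] il by auto
        then show "i = j" by simp
      qed
    qed
    moreover have "finite I" unfolding I_def by simp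
    ultimately show ?thesis using card_le_Suc0_iff_eq by fastforce
  qed
  finally show ?thesis using tf by simp
qed

lemma tf_sq:
  assumes "a \<in> V" "b \<in> V"
  shows "(tree_flow src dst T a b e)\<^sup>2 \<le> (if e \<in> path_edges src dst T a b then 1 else 0)"
proof (cases "tree_flow src dst T a b e = 0")
  case True then show ?thesis by simp
next
  case False
  have "(tree_flow src dst T a b e)\<^sup>2 \<le> 1"
    using tf_abs[OF assms, of e] by (simp add: abs_square_le_1)
  then show ?thesis using tf_support[OF False] by simp
qed

lemma path_edges_T: "path_edges src dst T a b \<subseteq> T"
  unfolding path_edges_def Let_def by auto

lemma tf_concat:
  assumes "a \<in> V" "b \<in> V"
  shows "(\<lambda>e. tree_flow src dst T a s e - tree_flow src dst T b s e) = tree_flow src dst T a b"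
proof (rule Tflow_unique)
  show "\<forall>e. e \<notin> T \<longrightarrow> tree_flow src dst T a s e - tree_flow src dst T b s e = 0" by (simp add: tf_out)
  show "\<forall>e. e \<notin> T \<longrightarrow> tree_flow src dst T a b e = 0" by (simp add: tf_out)
  show "\<forall>c\<in>V. (\<Sum>e\<in>E. inc src dst e c * (tree_flow src dst T a s e - tree_flow src dst T b s e)) =
       (\<Sum>e\<in>E. inc src dst e c * tree_flow src dst T a b e)"
  proof
    fix c assume "c \<in> V"
    have "(\<Sum>e\<in>E. inc src dst e c * (tree_flow src dst T a s e - tree_flow src dst T b s e))
      = (\<Sum>e\<in>E. inc src dst e c * tree_flow src dst T a s e) - (\<Sum>e\<in>E. inc src dst e c * tree_flow src dst T b s e)"
      by (simp add: right_diff_distrib sum_subtractf)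
    then show "(\<Sum>e\<in>E. inc src dst e c * (tree_flow src dst T a s e - tree_flow src dst T b s e)) =
       (\<Sum>e\<in>E. inc src dst e c * tree_flow src dst T a b e)"
      using tf_div[OF assms(1) sV, of c] tf_div[OF assms(2) sV, of c] tf_div[OF assms, of c] by simp
  qed
qed

lemma tf_edge:
  assumes e0: "e0 \<in> T"
  shows "tree_flow src dst T (src e0) (dst e0) = (\<lambda>e. if e = e0 then 1 else 0)"
proof -
  have E0: "e0 \<in> E" using e0 TE by auto
  have en: "src e0 \<in> V" "dst e0 \<in> V" "src e0 \<noteq> dst e0" using ends[OF E0] by auto
  show ?thesis
  proof (rule Tflow_unique)
    show "\<forall>e. e \<notin> T \<longrightarrow> tree_flow src dst T (src e0) (dst e0) e = 0" by (simp add: tf_out)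
    show "\<forall>e. e \<notin> T \<longrightarrow> (if e = e0 then 1 else 0) = (0::real)" using e0 by auto
    show "\<forall>c\<in>V. (\<Sum>e\<in>E. inc src dst e c * tree_flow src dst T (src e0) (dst e0) e) =
       (\<Sum>e\<in>E. inc src dst e c * (if e = e0 then 1 else 0))"
    proof
      fix c assume "c \<in> V"
      have "(\<Sum>e\<in>E. inc src dst e c * (if e = e0 then 1 else 0)) = (\<Sum>e\<in>E. if e = e0 then inc src dst e c else 0)"
        by (intro sum.cong) auto
      also have "\<dots> = inc src dst e0 c" using finE E0 by (simp add: sum.delta')
      finally show "(\<Sum>e\<in>E. inc src dst e c * tree_flow src dst T (src e0) (dst e0) e) =
         (\<Sum>e\<in>E. inc src dst e c * (if e = e0 then 1 else 0))"
        using tf_div[OF en(1,2)] en(3) by (simp add: inc_eq)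
    qed
  qed
qed

lemma f0_eq: "tree_flow0 V E src dst T chi = (\<lambda>e. \<Sum>a\<in>V. chi a * tree_flow src dst T a s e)"
proof -
  define F0 where "F0 = (\<lambda>e. \<Sum>a\<in>V. chi a * tree_flow src dst T a s e)"
  have z: "\<forall>e. e \<notin> T \<longrightarrow> F0 e = 0" unfolding F0_def by (simp add: tf_out)
  have fe: "feasible V E src dst chi F0"
    unfolding feasible_def
  proof
    fix c assume c: "c \<in> V"
    have "(\<Sum>e\<in>E. inc src dst e c * F0 e) = (\<Sum>a\<in>V. chi a * (\<Sum>e\<in>E. inc src dst e c * tree_flow src dst T a s e))"
      unfolding F0_def by (simp add: sum_distrib_left sum.swap[of _ E] algebra_simps)
    also have "\<dots> = (\<Sum>a\<in>V. chi a * ((if c = a then 1 else 0) - (if c = s then 1 else 0)))"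
      using tf_div sV by (intro sum.cong) auto
    also have "\<dots> = (\<Sum>a\<in>V. (if a = c then chi a else 0) - (if c = s then 1 else 0) * chi a)"
      by (intro sum.cong) auto
    also have "\<dots> = (\<Sum>a\<in>V. (if a = c then chi a else 0)) - (if c = s then 1 else 0) * (\<Sum>a\<in>V. chi a)"
      by (simp add: sum_subtractf sum_distrib_left)
    also have "\<dots> = chi c" using chi0 c finV by (simp add: sum.delta')
    finally show "(\<Sum>e\<in>E. inc src dst e c * F0 e) = chi c" .
  qed
  show ?thesis
    unfolding tree_flow0_def F0_def[symmetric]
  proof (rule the_equality)
    show "(\<forall>e. e \<notin> T \<longrightarrow> F0 e = 0) \<and> feasible V E src dst chi F0" using z fe by blast
    fix f assume f: "(\<forall>e. e \<notin> T \<longrightarrow> f e = 0) \<and> feasible V E src dst chi f"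
    show "f = F0"
      by (rule Tflow_unique) (use f z fe in \<open>auto simp: feasible_def\<close>)
  qed
qed

lemma cyc_eq: "cycle_vec src dst T e = (\<lambda>e'. (if e' = e then 1 else 0) - tree_flow src dst T (src e) (dst e) e')"
  by (simp add: cycle_vec_def)

lemma cyc_circ:
  assumes e: "e \<in> E - T"
  shows "(\<Sum>e'\<in>E. inc src dst e' c * cycle_vec src dst T e e') = 0"
proof -
  have en: "src e \<in> V" "dst e \<in> V" "src e \<noteq> dst e" using ends e by auto
  have "(\<Sum>e'\<in>E. inc src dst e' c * cycle_vec src dst T e e')
     = (\<Sum>e'\<in>E. if e' = e then inc src dst e' c else 0) - (\<Sum>e'\<in>E. inc src dst e' c * tree_flow src dst T (src e) (dst e) e')"
  proof -
    have "(\<Sum>e'\<in>E. inc src dst e' c * cycle_vec src dst T e e')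
      = (\<Sum>e'\<in>E. (if e' = e then inc src dst e' c else 0) - inc src dst e' c * tree_flow src dst T (src e) (dst e) e')"
      unfolding cyc_eq by (intro sum.cong) (auto simp: right_diff_distrib)
    then show ?thesis by (simp add: sum_subtractf)
  qed
  also have "\<dots> = 0" using tf_div[OF en(1,2)] e finE en(3) by (simp add: sum.delta' inc_eq)
  finally show ?thesis .
qed

lemma cyc_self: "e \<in> E - T \<Longrightarrow> cycle_vec src dst T e e = 1"
  by (simp add: cyc_eq tf_out)

lemma cyc_other: "e \<in> E - T \<Longrightarrow> e' \<notin> T \<Longrightarrow> e' \<noteq> e \<Longrightarrow> cycle_vec src dst T e e' = 0"
  by (simp add: cyc_eq tf_out)

lemma circ_decomp:
  assumes z: "\<forall>e. e \<notin> E \<longrightarrow> g e = 0" and c: "\<forall>c\<in>V. (\<Sum>e\<in>E. inc src dst e c * g e) = 0"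
  shows "g = (\<lambda>e'. \<Sum>e\<in>E - T. g e * cycle_vec src dst T e e')"
proof -
  define h where "h e' = g e' - (\<Sum>e\<in>E - T. g e * cycle_vec src dst T e e')" for e'
  have "h = (\<lambda>_. 0)"
  proof (rule Tflow_unique)
    show "\<forall>e'. e' \<notin> T \<longrightarrow> h e' = 0"
    proof (intro allI impI)
      fix e' assume e': "e' \<notin> T"
      show "h e' = 0"
      proof (cases "e' \<in> E")
        case False
        then have "\<forall>e\<in>E - T. cycle_vec src dst T e e' = 0" using cyc_other e' by auto
        then show ?thesis using z False unfolding h_def by simp
      next
        case True
        have "(\<Sum>e\<in>E - T. g e * cycle_vec src dst T e e') = (\<Sum>e\<in>E - T. if e = e' then g e else 0)"
          using cyc_self cyc_other e' by (intro sum.cong) auto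
        also have "\<dots> = g e'" using True e' finE by (simp add: sum.delta')
        finally show ?thesis unfolding h_def by simp
      qed
    qed
    show "\<forall>e. e \<notin> T \<longrightarrow> (0::real) = 0" by simp
    show "\<forall>c\<in>V. (\<Sum>e\<in>E. inc src dst e c * h e) = (\<Sum>e\<in>E. inc src dst e c * 0)"
    proof
      fix c0 assume c0: "c0 \<in> V"
      have "(\<Sum>e\<in>E. inc src dst e c0 * h e) = (\<Sum>e\<in>E. inc src dst e c0 * g e)
          - (\<Sum>e\<in>E - T. g e * (\<Sum>e'\<in>E. inc src dst e' c0 * cycle_vec src dst T e e'))"
        unfolding h_def by (simp add: algebra_simps sum_subtractf sum_distrib_left sum.swap[of _ E])
      also have "\<dots> = 0" using c c0 cyc_circ by simp
      finally show "(\<Sum>e\<in>E. inc src dst e c0 * h e) = (\<Sum>e\<in>E. inc src dst e c0 * 0)" by simp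
    qed
  qed
  show ?thesis
  proof
    fix e'
    have "h e' = 0" using \<open>h = (\<lambda>_. 0)\<close> by simp
    then show "g e' = (\<Sum>e\<in>E - T. g e * cycle_vec src dst T e e')" unfolding h_def by simp
  qed
qed

end


definition rV :: "'v set \<Rightarrow> ('v \<Rightarrow> 'v \<Rightarrow> real) \<Rightarrow> 'v \<Rightarrow> 'v \<Rightarrow> real" where
  "rV V Z = (\<lambda>a b. if a \<in> V \<and> b \<in> V then Z a b else 0)"

definition trM :: "('v \<Rightarrow> 'v \<Rightarrow> real) \<Rightarrow> 'v \<Rightarrow> 'v \<Rightarrow> real" where
  "trM Z = (\<lambda>a b. Z b a)"

lemma mm_rV: "matmul V (rV V X) (rV V Y) = rV V (matmul V X Y)"
  by (auto simp: fun_eq_iff rV_def matmul_def intro!: sum.cong)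

lemma mm_assoc: "finite V \<Longrightarrow> matmul V (matmul V X Y) Z = matmul V X (matmul V Y Z)"
  by (auto simp: fun_eq_iff matmul_def sum_distrib_left sum_distrib_right algebra_simps intro: sum.swap)

lemma tr_mm: "trM (matmul V X Y) = matmul V (trM Y) (trM X)"
  by (auto simp: fun_eq_iff matmul_def trM_def mult.commute)

lemma tr_rV: "trM (rV V X) = rV V (trM X)"
  by (auto simp: fun_eq_iff rV_def trM_def)

lemma rV_rV: "rV V (rV V X) = rV V X"
  by (auto simp: fun_eq_iff rV_def)

lemma rV_eq_iff: "rV V X = rV V Y \<longleftrightarrow> (\<forall>a\<in>V. \<forall>b\<in>V. X a b = Y a b)"
  by (auto simp: fun_eq_iff rV_def)

lemma penrose_alg:
  fixes A X Y :: "'v \<Rightarrow> 'v \<Rightarrow> real"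
  assumes fin: "finite V" and sA: "trM A = A"
    and X1: "matmul V (matmul V A X) A = A" and X2: "matmul V (matmul V X A) X = X"
    and X3: "matmul V A X = trM (matmul V A X)" and X4: "matmul V X A = trM (matmul V X A)"
    and Y1: "matmul V (matmul V A Y) A = A" and Y2: "matmul V (matmul V Y A) Y = Y"
    and Y3: "matmul V A Y = trM (matmul V A Y)" and Y4: "matmul V Y A = trM (matmul V Y A)"
  shows "X = Y"
proof -
  note as = mm_assoc[OF fin]
  let ?m = "matmul V"
  have F2: "?m A X = ?m (trM X) A" using X3 sA by (simp add: tr_mm)
  have F4: "?m A Y = ?m (trM Y) A" using Y3 sA by (simp add: tr_mm)
  have G2: "?m Y A = ?m A (trM Y)" using Y4 sA by (simp add: tr_mm)
  have G4: "?m X A = ?m A (trM X)" using X4 sA by (simp add: tr_mm)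
  have F3: "A = ?m A (?m (trM Y) A)"
  proof -
    have "trM A = trM (?m (?m A Y) A)" using Y1 by simp
    then show ?thesis using sA by (simp add: tr_mm as)
  qed
  have G3: "A = ?m (?m A (trM X)) A"
  proof -
    have "trM A = trM (?m (?m A X) A)" using X1 by simp
    then show ?thesis using sA by (simp add: tr_mm as)
  qed
  have "X = ?m X (?m A X)" using X2 by (simp add: as)
  also have "\<dots> = ?m X (?m (trM X) A)" using F2 by simp
  also have "\<dots> = ?m X (?m (trM X) (?m A (?m (trM Y) A)))" using F3 by simp
  also have "\<dots> = ?m X (?m (?m (trM X) A) (?m (trM Y) A))" by (simp add: as)
  also have "\<dots> = ?m X (?m (?m A X) (?m A Y))" using F2 F4 by simp
  also have "\<dots> = ?m (?m (?m X A) X) (?m A Y)" by (simp add: as)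
  also have "\<dots> = ?m X (?m A Y)" using X2 by simp
  finally have XX: "X = ?m X (?m A Y)" .
  have "Y = ?m (?m Y A) Y" using Y2 by simp
  also have "\<dots> = ?m (?m A (trM Y)) Y" using G2 by simp
  also have "\<dots> = ?m (?m (?m (?m A (trM X)) A) (trM Y)) Y" using G3 by simp
  also have "\<dots> = ?m (?m (?m A (trM X)) (?m A (trM Y))) Y" by (simp add: as)
  also have "\<dots> = ?m (?m (?m X A) (?m Y A)) Y" using G2 G4 by simp
  also have "\<dots> = ?m X (?m A (?m (?m Y A) Y))" by (simp add: as)
  also have "\<dots> = ?m X (?m A Y)" using Y2 by simp
  finally show ?thesis using XX by simp
qed

lemma walk_const:
  assumes "walk src dst F zs" "\<forall>e\<in>F. x (src e) = x (dst e)" "zs \<noteq> []"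
  shows "x (hd zs) = x (last zs)"
  using assms
proof (induction zs rule: induct_list012)
  case (3 a b zs)
  have "adj src dst F a b" using 3 by simp
  then have "x a = x b" using 3(4) unfolding adj_def by auto
  then show ?case using 3 by simp
qed auto

context ctx begin

lemma inc_sum:
  assumes "e \<in> E"
  shows "(\<Sum>b\<in>V. inc src dst e b * y b) = y (src e) - y (dst e)"
proof -
  have en: "src e \<in> V" "dst e \<in> V" "src e \<noteq> dst e" using ends assms by auto
  have "(\<Sum>b\<in>V. inc src dst e b * y b) = (\<Sum>b\<in>V. (if b = src e then y b else 0) - (if b = dst e then y b else 0))"
    using en(3) by (intro sum.cong) (auto simp: inc_def)
  also have "\<dots> = y (src e) - y (dst e)" using finV en by (simp add: sum_subtractf sum.delta')
  finally show ?thesis .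
qed

lemma lap_apply:
  "(\<Sum>b\<in>V. laplacian E src dst w a b * y b) = (\<Sum>e\<in>E. inc src dst e a * w e * (y (src e) - y (dst e)))"
proof -
  have "(\<Sum>b\<in>V. laplacian E src dst w a b * y b)
      = (\<Sum>e\<in>E. inc src dst e a * w e * (\<Sum>b\<in>V. inc src dst e b * y b))"
    unfolding laplacian_def inv_res
    by (simp add: sum_distrib_left sum_distrib_right sum.swap[of _ V] algebra_simps)
  also have "\<dots> = (\<Sum>e\<in>E. inc src dst e a * w e * (y (src e) - y (dst e)))"
    by (intro sum.cong) (auto simp: inc_sum)
  finally show ?thesis .
qed

lemma adjoint:
  "(\<Sum>e\<in>E. f e * (y (src e) - y (dst e))) = (\<Sum>c\<in>V. y c * (\<Sum>e\<in>E. inc src dst e c * f e))"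
proof -
  have "(\<Sum>c\<in>V. y c * (\<Sum>e\<in>E. inc src dst e c * f e)) = (\<Sum>e\<in>E. f e * (\<Sum>c\<in>V. inc src dst e c * y c))"
    by (simp add: sum_distrib_left sum.swap[of _ V] algebra_simps)
  also have "\<dots> = (\<Sum>e\<in>E. f e * (y (src e) - y (dst e)))"
    by (intro sum.cong) (auto simp: inc_sum)
  finally show ?thesis by simp
qed

lemma QF:
  "(\<Sum>a\<in>V. \<Sum>b\<in>V. y a * laplacian E src dst w a b * y b) = (\<Sum>e\<in>E. w e * (y (src e) - y (dst e))\<^sup>2)"
proof -
  have "(\<Sum>a\<in>V. \<Sum>b\<in>V. y a * laplacian E src dst w a b * y b) = (\<Sum>a\<in>V. y a * (\<Sum>b\<in>V. laplacian E src dst w a b * y b))"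
    by (simp add: sum_distrib_left mult.assoc)
  also have "\<dots> = (\<Sum>a\<in>V. y a * (\<Sum>e\<in>E. inc src dst e a * (w e * (y (src e) - y (dst e)))))"
    unfolding lap_apply by (simp add: mult.assoc)
  also have "\<dots> = (\<Sum>e\<in>E. (w e * (y (src e) - y (dst e))) * (y (src e) - y (dst e)))"
    using adjoint[of "\<lambda>e. w e * (y (src e) - y (dst e))" y] by simp
  finally show ?thesis by (simp add: power2_eq_square mult.assoc)
qed

lemma lap_sym: "laplacian E src dst w a b = laplacian E src dst w b a"
  unfolding laplacian_def by (simp add: mult.commute mult.left_commute)

lemma lap_colsum: "(\<Sum>a\<in>V. laplacian E src dst w a b) = 0"
proof -
  have "(\<Sum>a\<in>V. laplacian E src dst w a b) = (\<Sum>a\<in>V. laplacian E src dst w b a * 1)"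
    using lap_sym by simp
  also have "\<dots> = 0" unfolding lap_apply by simp
  finally show ?thesis .
qed

lemma sum_Lp1:
  "(\<Sum>a\<in>V. \<Sum>b\<in>V. (laplacian E src dst w a b + 1) * x b) = of_nat (card V) * (\<Sum>b\<in>V. x b)"
proof -
  let ?L = "laplacian E src dst w"
  have 1: "(\<Sum>a\<in>V. \<Sum>b\<in>V. (?L a b + 1) * x b) = (\<Sum>a\<in>V. \<Sum>b\<in>V. ?L a b * x b) + of_nat (card V) * (\<Sum>b\<in>V. x b)"
    by (simp add: distrib_right sum.distrib)
  have 2: "(\<Sum>a\<in>V. \<Sum>b\<in>V. ?L a b * x b) = (\<Sum>b\<in>V. (\<Sum>a\<in>V. ?L a b) * x b)"
    by (subst sum.swap) (simp add: sum_distrib_right)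
  show ?thesis using 1 2 by (simp add: lap_colsum)
qed

lemma lap_inj:
  "\<forall>x. (\<forall>a\<in>V. (\<Sum>b\<in>V. (laplacian E src dst w a b + 1) * x b) = 0) \<longrightarrow> (\<forall>a\<in>V. x a = 0)"
proof (intro allI impI)
  fix x :: "'v \<Rightarrow> real"
  assume h: "\<forall>a\<in>V. (\<Sum>b\<in>V. (laplacian E src dst w a b + 1) * x b) = 0"
  let ?L = "laplacian E src dst w"
  have "(\<Sum>a\<in>V. \<Sum>b\<in>V. (?L a b + 1) * x b) = of_nat (card V) * (\<Sum>b\<in>V. x b)"
    by (rule sum_Lp1)
  then have "of_nat (card V) * (\<Sum>b\<in>V. x b) = 0" using h by simp
  moreover have "card V > 0" using finV sV card_gt_0_iff by blast
  ultimately have sx: "(\<Sum>b\<in>V. x b) = 0" by simp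
  have lx: "\<forall>a\<in>V. (\<Sum>b\<in>V. ?L a b * x b) = 0"
  proof
    fix a assume "a \<in> V"
    then have "(\<Sum>b\<in>V. (?L a b + 1) * x b) = 0" using h by blast
    then show "(\<Sum>b\<in>V. ?L a b * x b) = 0" using sx by (simp add: algebra_simps sum.distrib)
  qed
  have z: "(\<Sum>e\<in>E. w e * (x (src e) - x (dst e))\<^sup>2) = 0"
    unfolding QF[symmetric] using lx by (simp add: mult.assoc sum_distrib_left[symmetric])
  have nn: "\<And>e. e \<in> E \<Longrightarrow> 0 \<le> w e * (x (src e) - x (dst e))\<^sup>2"
    using W by (simp add: less_imp_le)
  have "\<forall>e\<in>E. w e * (x (src e) - x (dst e))\<^sup>2 = 0"
    using iffD1[OF sum_nonneg_eq_0_iff[OF finE nn] z] .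
  then have eq: "\<forall>e\<in>E. x (src e) = x (dst e)"
  proof (intro ballI)
    fix e assume a: "\<forall>e\<in>E. w e * (x (src e) - x (dst e))\<^sup>2 = 0" "e \<in> E"
    then have "w e * (x (src e) - x (dst e))\<^sup>2 = 0" by blast
    moreover have "w e > 0" using W \<open>e \<in> E\<close> by blast
    ultimately show "x (src e) = x (dst e)" by simp
  qed
  have const: "x a = x s" if aV: "a \<in> V" for a
  proof -
    obtain zs where "zs \<noteq> []" "hd zs = a" "last zs = s" "walk src dst E zs"
      using C[unfolded connected_on_def, rule_format, OF aV sV] by blast
    then show ?thesis using walk_const[of src dst E zs x] eq by simp
  qed
  have "(\<Sum>b\<in>V. x b) = of_nat (card V) * x s" using const by simp
  then have "x s = 0" using sx \<open>card V > 0\<close> by simp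
  then show "\<forall>a\<in>V. x a = 0" using const by simp
qed

lemma lap_solve:
  assumes "(\<Sum>a\<in>V. y a) = 0"
  shows "\<exists>x. (\<forall>a\<in>V. (\<Sum>b\<in>V. laplacian E src dst w a b * x b) = y a) \<and> (\<Sum>a\<in>V. x a) = 0"
proof -
  let ?L = "laplacian E src dst w"
  obtain x where x: "\<forall>a\<in>V. (\<Sum>b\<in>V. (?L a b + 1) * x b) = y a"
    using inj_imp_surj[OF finV lap_inj] by blast
  have "(\<Sum>a\<in>V. \<Sum>b\<in>V. (?L a b + 1) * x b) = of_nat (card V) * (\<Sum>b\<in>V. x b)"
    by (rule sum_Lp1)
  then have "of_nat (card V) * (\<Sum>b\<in>V. x b) = 0" using x assms by simp
  moreover have "card V > 0" using finV sV card_gt_0_iff by blast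
  ultimately have sx: "(\<Sum>b\<in>V. x b) = 0" by simp
  have "\<forall>a\<in>V. (\<Sum>b\<in>V. ?L a b * x b) = y a"
  proof
    fix a assume "a \<in> V"
    then have "(\<Sum>b\<in>V. (?L a b + 1) * x b) = y a" using x by blast
    then show "(\<Sum>b\<in>V. ?L a b * x b) = y a" using sx by (simp add: algebra_simps sum.distrib)
  qed
  then show ?thesis using sx by blast
qed

end


lemma penrose_conv:
  fixes L Z :: "'v \<Rightarrow> 'v \<Rightarrow> real"
  assumes Z: "rV V Z = Z"
    and H: "\<forall>a\<in>V. \<forall>b\<in>V. matmul V (matmul V L Z) L a b = L a b \<and> matmul V (matmul V Z L) Z a b = Z a b \<and>
        matmul V L Z a b = matmul V L Z b a \<and> matmul V Z L a b = matmul V Z L b a"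
  shows "matmul V (matmul V (rV V L) Z) (rV V L) = rV V L"
    "matmul V (matmul V Z (rV V L)) Z = Z"
    "matmul V (rV V L) Z = trM (matmul V (rV V L) Z)"
    "matmul V Z (rV V L) = trM (matmul V Z (rV V L))"
proof -
  have m1: "matmul V (rV V L) Z = rV V (matmul V L Z)" using mm_rV[of V L Z] Z by simp
  have m2: "matmul V Z (rV V L) = rV V (matmul V Z L)" using mm_rV[of V Z L] Z by simp
  show "matmul V (matmul V (rV V L) Z) (rV V L) = rV V L"
    unfolding m1 mm_rV rV_eq_iff using H by blast
  show "matmul V (matmul V Z (rV V L)) Z = Z"
    unfolding m2 using mm_rV[of V "matmul V Z L" Z] Z rV_eq_iff[of V "matmul V (matmul V Z L) Z" Z] H
    by (metis rV_rV)
  have "rV V (matmul V L Z) = rV V (trM (matmul V L Z))" unfolding rV_eq_iff trM_def using H by blast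
  then show "matmul V (rV V L) Z = trM (matmul V (rV V L) Z)" unfolding m1 tr_rV .
  have "rV V (matmul V Z L) = rV V (trM (matmul V Z L))" unfolding rV_eq_iff trM_def using H by blast
  then show "matmul V Z (rV V L) = trM (matmul V Z (rV V L))" unfolding m2 tr_rV .
qed

lemma sum_dm1:
  fixes f :: "'a \<Rightarrow> real"
  assumes "finite V"
  shows "(\<Sum>c\<in>V. f c * ((if c = b then 1 else 0) - k)) = (if b \<in> V then f b else 0) - k * (\<Sum>c\<in>V. f c)"
proof -
  have "(\<Sum>c\<in>V. f c * ((if c = b then 1 else 0) - k)) = (\<Sum>c\<in>V. (if c = b then f c else 0) - k * f c)"
    by (intro sum.cong) (auto simp: algebra_simps)
  then show ?thesis using assms by (simp add: sum_subtractf sum_distrib_left sum.delta')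
qed

lemma sum_dm2:
  fixes f :: "'a \<Rightarrow> real"
  assumes "finite V"
  shows "(\<Sum>c\<in>V. ((if b = c then 1 else 0) - k) * f c) = (if b \<in> V then f b else 0) - k * (\<Sum>c\<in>V. f c)"
proof -
  have "(\<Sum>c\<in>V. ((if b = c then 1 else 0) - k) * f c) = (\<Sum>c\<in>V. f c * ((if c = b then 1 else 0) - k))"
    by (intro sum.cong) (auto simp: algebra_simps)
  then show ?thesis using sum_dm1[OF assms] by simp
qed

context ctx begin

lemma pinv_prop:
  "\<forall>a\<in>V. (\<Sum>b\<in>V. laplacian E src dst w a b * mvec V (pinv V (laplacian E src dst w)) chi b) = chi a"
proof -
  let ?L = "laplacian E src dst w"
  define n where "n = real (card V)"
  have npos: "n > 0" using finV sV card_gt_0_iff unfolding n_def by auto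
  have ex: "\<exists>x. (\<forall>a\<in>V. (\<Sum>c\<in>V. ?L a c * x c) = (if a = b then 1 else 0) - 1 / n) \<and> (\<Sum>a\<in>V. x a) = 0"
    if b: "b \<in> V" for b
  proof (rule lap_solve)
    have "(\<Sum>a\<in>V. (if a = b then 1 else 0) - 1 / n) = 1 - real (card V) * (1 / n)"
      using b finV by (simp add: sum_subtractf sum.delta')
    then show "(\<Sum>a\<in>V. (if a = b then 1 else 0) - 1 / n) = 0" using npos unfolding n_def by simp
  qed
  define colv where "colv b = (SOME x. (\<forall>a\<in>V. (\<Sum>c\<in>V. ?L a c * x c) = (if a = b then 1 else 0) - 1 / n) \<and> (\<Sum>a\<in>V. x a) = 0)" for b
  have colv: "(\<forall>a\<in>V. (\<Sum>c\<in>V. ?L a c * colv b c) = (if a = b then 1 else 0) - 1 / n) \<and> (\<Sum>a\<in>V. colv b a) = 0"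
    if "b \<in> V" for b
    unfolding colv_def by (rule someI_ex[OF ex[OF that]])
  define M where "M a b = (if a \<in> V \<and> b \<in> V then colv b a else 0)" for a b
  have LM: "matmul V ?L M a b = (if a = b then 1 else 0) - 1 / n" if "a \<in> V" "b \<in> V" for a b
  proof -
    have "matmul V ?L M a b = (\<Sum>c\<in>V. ?L a c * colv b c)"
      unfolding matmul_def M_def using that by (intro sum.cong) auto
    then show ?thesis using colv that by simp
  qed
  have colsum: "(\<Sum>c\<in>V. M c b) = 0" if "b \<in> V" for b
  proof -
    have "(\<Sum>c\<in>V. M c b) = (\<Sum>c\<in>V. colv b c)" unfolding M_def using that by (intro sum.cong) auto
    then show ?thesis using colv that by simp
  qed
  have symc: "colv a b = colv b a" if ab: "a \<in> V" "b \<in> V" for a b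
  proof -
    define Q where "Q = (\<Sum>c\<in>V. \<Sum>d\<in>V. colv a c * ?L c d * colv b d)"
    have "Q = (\<Sum>c\<in>V. colv a c * (\<Sum>d\<in>V. ?L c d * colv b d))"
      unfolding Q_def by (simp add: sum_distrib_left mult.assoc)
    also have "\<dots> = (\<Sum>c\<in>V. colv a c * ((if c = b then 1 else 0) - 1 / n))"
      using colv[OF ab(2)] by (intro sum.cong) auto
    also have "\<dots> = colv a b" using colv[OF ab(1)] ab by (simp add: sum_dm1[OF finV])
    finally have Q1: "Q = colv a b" .
    have "Q = (\<Sum>d\<in>V. \<Sum>c\<in>V. colv b d * ?L d c * colv a c)"
      unfolding Q_def by (subst sum.swap) (simp add: lap_sym mult.commute mult.left_commute)
    also have "\<dots> = (\<Sum>d\<in>V. colv b d * (\<Sum>c\<in>V. ?L d c * colv a c))"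
      by (simp add: sum_distrib_left mult.assoc)
    also have "\<dots> = (\<Sum>d\<in>V. colv b d * ((if d = a then 1 else 0) - 1 / n))"
      using colv[OF ab(1)] by (intro sum.cong) auto
    also have "\<dots> = colv b a" using colv[OF ab(2)] ab by (simp add: sum_dm1[OF finV])
    finally show ?thesis using Q1 by simp
  qed
  have symM: "M a b = M b a" if "a \<in> V" "b \<in> V" for a b
    unfolding M_def using symc that by auto
  have MLp: "matmul V M ?L a b = (if a = b then 1 else 0) - 1 / n" if ab: "a \<in> V" "b \<in> V" for a b
  proof -
    have "matmul V M ?L a b = matmul V ?L M b a"
      unfolding matmul_def using symM ab lap_sym by (intro sum.cong) (auto simp: mult.commute)
    then show ?thesis using LM[OF ab(2,1)] by auto
  qed
  have Mz: "\<forall>a b. a \<notin> V \<or> b \<notin> V \<longrightarrow> M a b = 0" unfolding M_def by auto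
  have HM: "\<forall>a\<in>V. \<forall>b\<in>V. matmul V (matmul V ?L M) ?L a b = ?L a b \<and> matmul V (matmul V M ?L) M a b = M a b \<and>
        matmul V ?L M a b = matmul V ?L M b a \<and> matmul V M ?L a b = matmul V M ?L b a"
  proof (intro ballI conjI)
    fix a b assume a: "a \<in> V" and b: "b \<in> V"
    have "matmul V (matmul V ?L M) ?L a b = (\<Sum>c\<in>V. ((if a = c then 1 else 0) - 1 / n) * ?L c b)"
      unfolding matmul_def[of V "matmul V ?L M"] using LM a by (intro sum.cong) auto
    also have "\<dots> = ?L a b" using a by (simp add: lap_colsum sum_dm2[OF finV])
    finally show "matmul V (matmul V ?L M) ?L a b = ?L a b" .
    have "matmul V (matmul V M ?L) M a b = (\<Sum>c\<in>V. ((if a = c then 1 else 0) - 1 / n) * M c b)"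
      unfolding matmul_def[of V "matmul V M ?L"] using MLp a by (intro sum.cong) auto
    also have "\<dots> = M a b" using a b by (simp add: colsum sum_dm2[OF finV])
    finally show "matmul V (matmul V M ?L) M a b = M a b" .
    show "matmul V ?L M a b = matmul V ?L M b a" using LM a b by auto
    show "matmul V M ?L a b = matmul V M ?L b a" using MLp a b by auto
  qed
  have rVz: "rV V Z = Z" if "\<forall>a b. a \<notin> V \<or> b \<notin> V \<longrightarrow> Z a b = 0" for Z
    using that by (auto simp: rV_def fun_eq_iff)
  have trL: "trM (rV V ?L) = rV V ?L" unfolding tr_rV trM_def by (simp add: rV_def fun_eq_iff lap_sym[of _ _])
  have pM: "pinv V ?L = M"
    unfolding pinv_def
  proof (rule the_equality)
    show "(\<forall>a b. a \<notin> V \<or> b \<notin> V \<longrightarrow> M a b = 0) \<and> (\<forall>a\<in>V. \<forall>b\<in>V. matmul V (matmul V ?L M) ?L a b = ?L a b \<and>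
        matmul V (matmul V M ?L) M a b = M a b \<and> matmul V ?L M a b = matmul V ?L M b a \<and> matmul V M ?L a b = matmul V M ?L b a)"
      using Mz HM by blast
    fix M' assume h: "(\<forall>a b. a \<notin> V \<or> b \<notin> V \<longrightarrow> M' a b = 0) \<and> (\<forall>a\<in>V. \<forall>b\<in>V. matmul V (matmul V ?L M') ?L a b = ?L a b \<and>
        matmul V (matmul V M' ?L) M' a b = M' a b \<and> matmul V ?L M' a b = matmul V ?L M' b a \<and> matmul V M' ?L a b = matmul V M' ?L b a)"
    have r1: "rV V M' = M'" using h rVz by blast
    have r2: "rV V M = M" using Mz rVz by blast
    note c1 = penrose_conv[OF r1, of ?L] h
    note c2 = penrose_conv[OF r2 HM]
    show "M' = M"
      by (rule penrose_alg[OF finV trL]) (use c1 c2 in auto)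
  qed
  show ?thesis
  proof
    fix a assume a: "a \<in> V"
    have "(\<Sum>b\<in>V. ?L a b * mvec V M chi b) = (\<Sum>c\<in>V. chi c * matmul V ?L M a c)"
      unfolding mvec_def matmul_def
      by (simp add: sum_distrib_left sum_distrib_right) (subst sum.swap, simp add: ac_simps)
    also have "\<dots> = (\<Sum>c\<in>V. chi c * ((if c = a then 1 else 0) - 1 / n))"
      using LM a by (intro sum.cong) auto
    also have "\<dots> = chi a" using a chi0 by (simp add: sum_dm1[OF finV])
    finally show "(\<Sum>b\<in>V. ?L a b * mvec V (pinv V ?L) chi b) = chi a" unfolding pM .
  qed
qed

end


lemma cs_sum:
  fixes a b :: "'a \<Rightarrow> real"
  shows "(\<Sum>i\<in>I. a i * b i)\<^sup>2 \<le> (\<Sum>i\<in>I. (a i)\<^sup>2) * (\<Sum>i\<in>I. (b i)\<^sup>2)"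
proof (cases "(\<Sum>i\<in>I. (b i)\<^sup>2) > 0")
  case False
  then consider "\<And>i. i\<in>I \<Longrightarrow> b i = 0" | "infinite I"
    by (metis (mono_tags, lifting) sum_pos2 zero_le_power2 zero_less_power2)
  thus ?thesis
    by fastforce
next
  case True
  define r where "r \<equiv> (\<Sum>i\<in>I. a i * b i) / (\<Sum>i\<in>I. (b i)\<^sup>2)"
  have "0 \<le> (\<Sum>i\<in>I. (a i - r * b i)\<^sup>2)"
    by (simp add: sum_nonneg)
  also have "... = (\<Sum>i\<in>I. (a i)\<^sup>2) - 2 * r * (\<Sum>i\<in>I. a i * b i) + r\<^sup>2 * (\<Sum>i\<in>I. (b i)\<^sup>2)"
    by (simp add: algebra_simps power2_eq_square sum_distrib_left flip: sum.distrib)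
  also have "\<dots> = (\<Sum>i\<in>I. (a i)\<^sup>2) - ((\<Sum>i\<in>I. a i * b i))\<^sup>2 / (\<Sum>i\<in>I. (b i)\<^sup>2)"
    by (simp add: r_def power2_eq_square)
  finally have "0 \<le> (\<Sum>i\<in>I. (a i)\<^sup>2) - ((\<Sum>i\<in>I. a i * b i))\<^sup>2 / (\<Sum>i\<in>I. (b i)\<^sup>2)" .
  hence "((\<Sum>i\<in>I. a i * b i))\<^sup>2 / (\<Sum>i\<in>I. (b i)\<^sup>2) \<le> (\<Sum>i\<in>I. (a i)\<^sup>2)"
    by (simp add: le_diff_eq)
  thus "((\<Sum>i\<in>I. a i * b i))\<^sup>2 \<le> (\<Sum>i\<in>I. (a i)\<^sup>2) * (\<Sum>i\<in>I. (b i)\<^sup>2)"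
    by (simp add: pos_divide_le_eq True)
qed

lemma wcs:
  fixes r a b :: "'a \<Rightarrow> real"
  assumes "\<forall>i\<in>I. 0 \<le> r i"
  shows "(\<Sum>i\<in>I. r i * a i * b i)\<^sup>2 \<le> (\<Sum>i\<in>I. r i * (a i)\<^sup>2) * (\<Sum>i\<in>I. r i * (b i)\<^sup>2)"
proof -
  have e1: "(\<Sum>i\<in>I. r i * a i * b i) = (\<Sum>i\<in>I. (sqrt (r i) * a i) * (sqrt (r i) * b i))"
  proof (intro sum.cong refl)
    fix i assume "i \<in> I"
    then have "sqrt (r i) * sqrt (r i) = r i" using assms by simp
    then show "r i * a i * b i = (sqrt (r i) * a i) * (sqrt (r i) * b i)" by (metis mult.assoc mult.left_commute)
  qed
  have e2: "(\<Sum>i\<in>I. r i * (c i)\<^sup>2) = (\<Sum>i\<in>I. (sqrt (r i) * c i)\<^sup>2)" for c :: "'a \<Rightarrow> real"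
    using assms by (intro sum.cong refl) (simp add: power_mult_distrib)
  show ?thesis unfolding e1 e2 by (rule cs_sum)
qed

context ctx begin

abbreviation "xstar \<equiv> mvec V (pinv V (laplacian E src dst w)) chi"
abbreviation "fstar \<equiv> (\<lambda>e. if e \<in> E then w e * (xstar (src e) - xstar (dst e)) else 0)"

lemma fstar_feas: "feasible V E src dst chi fstar"
  unfolding feasible_def
proof
  fix c assume c: "c \<in> V"
  have "(\<Sum>e\<in>E. inc src dst e c * fstar e) = (\<Sum>e\<in>E. inc src dst e c * w e * (xstar (src e) - xstar (dst e)))"
    by (intro sum.cong) auto
  also have "\<dots> = (\<Sum>b\<in>V. laplacian E src dst w c b * xstar b)" by (rule lap_apply[symmetric])
  also have "\<dots> = chi c" using pinv_prop c by blast
  finally show "(\<Sum>e\<in>E. inc src dst e c * fstar e) = chi c" .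
qed

lemma rfstar: "e \<in> E \<Longrightarrow> res w e * fstar e = xstar (src e) - xstar (dst e)"
  using w_res[of e] by (simp add: mult.assoc[symmetric] mult.commute[of "res w e"])

lemma fstar_orth:
  assumes "\<forall>c\<in>V. (\<Sum>e\<in>E. inc src dst e c * h e) = 0"
  shows "(\<Sum>e\<in>E. res w e * fstar e * h e) = 0"
proof -
  have "(\<Sum>e\<in>E. res w e * fstar e * h e) = (\<Sum>e\<in>E. h e * (xstar (src e) - xstar (dst e)))"
    using rfstar by (intro sum.cong) (auto simp: mult.commute)
  also have "\<dots> = (\<Sum>c\<in>V. xstar c * (\<Sum>e\<in>E. inc src dst e c * h e))" by (rule adjoint)
  also have "\<dots> = 0" using assms by simp
  finally show ?thesis .
qed

lemma div_diff:
  assumes "feasible V E src dst chi f"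
  shows "\<forall>c\<in>V. (\<Sum>e\<in>E. inc src dst e c * (f e - fstar e)) = 0"
proof
  fix c assume c: "c \<in> V"
  have "(\<Sum>e\<in>E. inc src dst e c * (f e - fstar e)) = (\<Sum>e\<in>E. inc src dst e c * f e) - (\<Sum>e\<in>E. inc src dst e c * fstar e)"
    by (simp add: right_diff_distrib sum_subtractf)
  then show "(\<Sum>e\<in>E. inc src dst e c * (f e - fstar e)) = 0"
    using assms fstar_feas c unfolding feasible_def by simp
qed

lemma energy_nonneg: "energy E w f \<ge> 0"
  unfolding energy_def using res_pos by (intro sum_nonneg) (simp add: less_imp_le)

lemma energy_split:
  assumes "feasible V E src dst chi f"
  shows "energy E w f = energy E w fstar + energy E w (\<lambda>e. f e - fstar e)"
proof -
  have o: "(\<Sum>e\<in>E. res w e * fstar e * (f e - fstar e)) = 0" using fstar_orth[OF div_diff[OF assms]] .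
  have "energy E w f = (\<Sum>e\<in>E. res w e * (fstar e)\<^sup>2 + 2 * (res w e * fstar e * (f e - fstar e)) + res w e * (f e - fstar e)\<^sup>2)"
    unfolding energy_def by (intro sum.cong) (auto simp: power2_eq_square algebra_simps)
  also have "\<dots> = energy E w fstar + 2 * (\<Sum>e\<in>E. res w e * fstar e * (f e - fstar e)) + energy E w (\<lambda>e. f e - fstar e)"
    unfolding energy_def by (simp add: sum.distrib sum_distrib_left)
  finally show ?thesis using o by simp
qed

lemma opt_eq: "opt_flow V E src dst w chi = fstar"
  unfolding opt_flow_def
proof (rule the_equality)
  show "(\<forall>e. e \<notin> E \<longrightarrow> fstar e = 0) \<and> feasible V E src dst chi fstar \<and>
    (\<forall>g. (\<forall>e. e \<notin> E \<longrightarrow> g e = 0) \<longrightarrow> feasible V E src dst chi g \<longrightarrow> energy E w fstar \<le> energy E w g)"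
  proof (intro conjI allI impI)
    show "\<And>e. e \<notin> E \<Longrightarrow> fstar e = 0" by simp
    show "feasible V E src dst chi fstar" by (rule fstar_feas)
    fix g assume "feasible V E src dst chi g"
    then have "energy E w g = energy E w fstar + energy E w (\<lambda>e. g e - fstar e)" by (rule energy_split)
    then show "energy E w fstar \<le> energy E w g" using energy_nonneg[of "\<lambda>e. g e - fstar e"] by linarith
  qed
next
  fix f assume h: "(\<forall>e. e \<notin> E \<longrightarrow> f e = 0) \<and> feasible V E src dst chi f \<and>
    (\<forall>g. (\<forall>e. e \<notin> E \<longrightarrow> g e = 0) \<longrightarrow> feasible V E src dst chi g \<longrightarrow> energy E w f \<le> energy E w g)"
  have "energy E w f \<le> energy E w fstar" using h fstar_feas by auto
  then have z: "energy E w (\<lambda>e. f e - fstar e) \<le> 0" using energy_split h by simp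
  have nn: "\<And>e. e \<in> E \<Longrightarrow> 0 \<le> res w e * (f e - fstar e)\<^sup>2" using res_pos by (simp add: less_imp_le)
  have "energy E w (\<lambda>e. f e - fstar e) = 0" using z energy_nonneg[of "\<lambda>e. f e - fstar e"] by simp
  then have "(\<Sum>e\<in>E. res w e * (f e - fstar e)\<^sup>2) = 0" unfolding energy_def .
  then have "\<forall>e\<in>E. res w e * (f e - fstar e)\<^sup>2 = 0"
    using sum_nonneg_eq_0_iff[OF finE, of "\<lambda>e. res w e * (f e - fstar e)\<^sup>2"] nn by blast
  show "f = fstar"
  proof
    fix e show "f e = fstar e"
    proof (cases "e \<in> E")
      case True
      then have "res w e * (f e - fstar e)\<^sup>2 = 0" using \<open>\<forall>e\<in>E. _\<close> by blast
      then show ?thesis using res_pos[OF True] by simp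
    next
      case False then show ?thesis using h by simp
    qed
  qed
qed

lemma volt_diff:
  assumes "e \<in> E"
  shows "tree_volt E src dst w T s f (src e) - tree_volt E src dst w T s f (dst e)
       = (\<Sum>e'\<in>E. res w e' * f e' * tree_flow src dst T (src e) (dst e) e')"
proof -
  have en: "src e \<in> V" "dst e \<in> V" using ends assms by auto
  have "tree_volt E src dst w T s f (src e) - tree_volt E src dst w T s f (dst e)
      = (\<Sum>e'\<in>E. res w e' * f e' * (tree_flow src dst T (src e) s e' - tree_flow src dst T (dst e) s e'))"
    unfolding tree_volt_def by (simp add: sum_subtractf right_diff_distrib)
  also have "\<dots> = (\<Sum>e'\<in>E. res w e' * f e' * tree_flow src dst T (src e) (dst e) e')"
    using fun_cong[OF tf_concat[OF en]] by simp
  finally show ?thesis .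
qed

lemma xstar_diff:
  assumes "e \<in> E"
  shows "xstar (src e) - xstar (dst e) = (\<Sum>e'\<in>E. res w e' * fstar e' * tree_flow src dst T (src e) (dst e) e')"
proof -
  have en: "src e \<in> V" "dst e \<in> V" "src e \<noteq> dst e" using ends assms by auto
  have "(\<Sum>e'\<in>E. res w e' * fstar e' * tree_flow src dst T (src e) (dst e) e')
      = (\<Sum>e'\<in>E. tree_flow src dst T (src e) (dst e) e' * (xstar (src e') - xstar (dst e')))"
    using rfstar by (intro sum.cong) (auto simp: mult.commute)
  also have "\<dots> = (\<Sum>c\<in>V. xstar c * ((if c = src e then 1 else 0) - (if c = dst e then 1 else 0)))"
    unfolding adjoint using tf_div[OF en(1,2)] by simp
  also have "\<dots> = (\<Sum>c\<in>V. (if c = src e then xstar c else 0) - (if c = dst e then xstar c else 0))"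
    by (intro sum.cong) auto
  also have "\<dots> = xstar (src e) - xstar (dst e)" using en finV by (simp add: sum_subtractf sum.delta')
  finally show ?thesis by simp
qed

lemma tf_edge_sum:
  assumes "e \<in> T"
  shows "(\<Sum>e'\<in>E. h e' * tree_flow src dst T (src e) (dst e) e') = h e"
proof -
  have "(\<Sum>e'\<in>E. h e' * tree_flow src dst T (src e) (dst e) e') = (\<Sum>e'\<in>E. if e' = e then h e' else 0)"
    unfolding tf_edge[OF assms] by (intro sum.cong) auto
  also have "\<dots> = h e" using assms TE finE by (auto simp: sum.delta')
  finally show ?thesis .
qed

lemma cres_eq:
  assumes "e \<in> E - T"
  shows "cycle_res E src dst w T e = res w e + (\<Sum>e'\<in>E. res w e' * (tree_flow src dst T (src e) (dst e) e')\<^sup>2)"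
proof -
  have "cycle_res E src dst w T e = (\<Sum>e'\<in>E. (if e' = e then res w e' else 0) + res w e' * (tree_flow src dst T (src e) (dst e) e')\<^sup>2)"
    unfolding cycle_res_def cyc_eq using assms by (intro sum.cong) (auto simp: tf_out power2_eq_square algebra_simps)
  also have "\<dots> = res w e + (\<Sum>e'\<in>E. res w e' * (tree_flow src dst T (src e) (dst e) e')\<^sup>2)"
    using assms finE by (simp add: sum.distrib sum.delta')
  finally show ?thesis .
qed

lemma pi_sq_sum:
  assumes "e \<in> E"
  shows "(\<Sum>e'\<in>E. res w e' * (tree_flow src dst T (src e) (dst e) e')\<^sup>2) \<le> (\<Sum>e'\<in>path_edges src dst T (src e) (dst e). res w e')"
proof -
  have en: "src e \<in> V" "dst e \<in> V" using ends assms by auto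
  have "(\<Sum>e'\<in>E. res w e' * (tree_flow src dst T (src e) (dst e) e')\<^sup>2)
     \<le> (\<Sum>e'\<in>E. res w e' * (if e' \<in> path_edges src dst T (src e) (dst e) then 1 else 0))"
    using tf_sq[OF en] res_pos by (intro sum_mono mult_left_mono) (auto simp: less_imp_le)
  also have "\<dots> = (\<Sum>e'\<in>E \<inter> path_edges src dst T (src e) (dst e). res w e')"
    by (simp add: sum.inter_restrict[OF finE] if_distrib cong: if_cong)
  also have "E \<inter> path_edges src dst T (src e) (dst e) = path_edges src dst T (src e) (dst e)"
    using path_edges_T TE by auto
  finally show ?thesis .
qed

lemma pi_cs:
  assumes "e \<in> E"
  shows "(\<Sum>e'\<in>E. res w e' * g e' * tree_flow src dst T (src e) (dst e) e')\<^sup>2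
     \<le> (\<Sum>e'\<in>E. res w e' * (tree_flow src dst T (src e) (dst e) e')\<^sup>2) * (\<Sum>e'\<in>T. res w e' * (g e')\<^sup>2)"
proof -
  let ?p = "tree_flow src dst T (src e) (dst e)"
  define gT where "gT e' = (if e' \<in> T then g e' else 0)" for e'
  have "(\<Sum>e'\<in>E. res w e' * g e' * ?p e') = (\<Sum>e'\<in>E. res w e' * ?p e' * gT e')"
    unfolding gT_def by (intro sum.cong) (auto simp: tf_out)
  also have "(\<dots>)\<^sup>2 \<le> (\<Sum>e'\<in>E. res w e' * (?p e')\<^sup>2) * (\<Sum>e'\<in>E. res w e' * (gT e')\<^sup>2)"
    using res_pos by (intro wcs) (auto simp: less_imp_le)
  also have "(\<Sum>e'\<in>E. res w e' * (gT e')\<^sup>2) = (\<Sum>e'\<in>T. res w e' * (g e')\<^sup>2)"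
    unfolding gT_def by (rule sum.mono_neutral_cong_right[OF finE TE]) auto
  finally show ?thesis .
qed

lemma energyT_le: "(\<Sum>e'\<in>T. res w e' * (g e')\<^sup>2) \<le> energy E w g"
  unfolding energy_def using res_pos TE by (intro sum_mono2[OF finE]) (auto simp: less_imp_le)

lemma tcond_ge: "tcond E src dst w T \<ge> real (card (E - T))"
proof -
  have "tcond E src dst w T \<ge> (\<Sum>e\<in>E - T. 1)"
    unfolding tcond_def
  proof (intro sum_mono)
    fix e assume e: "e \<in> E - T"
    have "res w e \<le> cycle_res E src dst w T e"
      using cres_eq[OF e] res_pos by (auto intro!: sum_nonneg simp: less_imp_le)
    then show "1 \<le> cycle_res E src dst w T e / res w e" using res_pos e by simp
  qed
  then show ?thesis by simp
qed

lemma tcond_ge1: "tcond E src dst w T \<ge> 1"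
proof -
  have "card (E - T) \<ge> 1" using NT finE by (simp add: Suc_le_eq card_gt_0_iff)
  then show ?thesis using tcond_ge by linarith
qed

lemma volt_bound:
  assumes "feasible V E src dst chi f"
  shows "(mnorm V (laplacian E src dst w) (\<lambda>a. tree_volt E src dst w T s f a - xstar a))\<^sup>2
     \<le> tcond E src dst w T * energy E w (\<lambda>e. f e - fstar e)"
proof -
  define g where "g e = f e - fstar e" for e
  define y where "y a = tree_volt E src dst w T s f a - xstar a" for a
  define \<xi>T where "\<xi>T = (\<Sum>e'\<in>T. res w e' * (g e')\<^sup>2)"
  let ?p = "\<lambda>e. tree_flow src dst T (src e) (dst e)"
  have yd: "y (src e) - y (dst e) = (\<Sum>e'\<in>E. res w e' * g e' * ?p e e')" if "e \<in> E" for e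
    unfolding y_def g_def using volt_diff[OF that, of f] xstar_diff[OF that]
    by (simp add: sum_subtractf[symmetric] algebra_simps)
  have q: "(\<Sum>a\<in>V. \<Sum>b\<in>V. y a * laplacian E src dst w a b * y b) = (\<Sum>e\<in>E. w e * (y (src e) - y (dst e))\<^sup>2)"
    by (rule QF)
  have qn: "0 \<le> (\<Sum>e\<in>E. w e * (y (src e) - y (dst e))\<^sup>2)" using W by (intro sum_nonneg) (simp add: less_imp_le)
  have "(mnorm V (laplacian E src dst w) y)\<^sup>2 = (\<Sum>e\<in>E. w e * (y (src e) - y (dst e))\<^sup>2)"
    unfolding mnorm_def q using qn by simp
  also have "\<dots> = (\<Sum>e\<in>E - T. w e * (y (src e) - y (dst e))\<^sup>2) + (\<Sum>e\<in>T. w e * (y (src e) - y (dst e))\<^sup>2)"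
    by (rule sum.subset_diff[OF TE finE])
  also have "(\<Sum>e\<in>T. w e * (y (src e) - y (dst e))\<^sup>2) = \<xi>T"
    unfolding \<xi>T_def
  proof (intro sum.cong refl)
    fix e assume e: "e \<in> T"
    have eE: "e \<in> E" using e TE by auto
    have "y (src e) - y (dst e) = res w e * g e" using yd[OF eE] tf_edge_sum[OF e, of "\<lambda>e'. res w e' * g e'"] by simp
    then show "w e * (y (src e) - y (dst e))\<^sup>2 = res w e * (g e)\<^sup>2"
      using w_res[OF eE] by (simp add: power2_eq_square algebra_simps)
  qed
  also have "(\<Sum>e\<in>E - T. w e * (y (src e) - y (dst e))\<^sup>2) \<le> (\<Sum>e\<in>E - T. (cycle_res E src dst w T e / res w e - 1) * \<xi>T)"
  proof (intro sum_mono)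
    fix e assume e: "e \<in> E - T"
    have eE: "e \<in> E" using e by auto
    have "(y (src e) - y (dst e))\<^sup>2 \<le> (\<Sum>e'\<in>E. res w e' * (?p e e')\<^sup>2) * \<xi>T"
      unfolding yd[OF eE] \<xi>T_def by (rule pi_cs[OF eE])
    also have "(\<Sum>e'\<in>E. res w e' * (?p e e')\<^sup>2) = cycle_res E src dst w T e - res w e" using cres_eq[OF e] by simp
    finally have "w e * (y (src e) - y (dst e))\<^sup>2 \<le> w e * ((cycle_res E src dst w T e - res w e) * \<xi>T)"
      using W eE by (intro mult_left_mono) (auto simp: less_imp_le)
    also have "\<dots> = (cycle_res E src dst w T e / res w e - 1) * \<xi>T"
      using res_pos[OF eE] by (simp add: res_def field_simps)
    finally show "w e * (y (src e) - y (dst e))\<^sup>2 \<le> (cycle_res E src dst w T e / res w e - 1) * \<xi>T" .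
  qed
  also have "(\<Sum>e\<in>E - T. (cycle_res E src dst w T e / res w e - 1) * \<xi>T) = (tcond E src dst w T - real (card (E - T))) * \<xi>T"
    unfolding tcond_def by (simp add: sum_distrib_right[symmetric] sum_subtractf)
  finally have "(mnorm V (laplacian E src dst w) y)\<^sup>2 \<le> (tcond E src dst w T - real (card (E - T))) * \<xi>T + \<xi>T" by simp
  also have "\<dots> \<le> tcond E src dst w T * \<xi>T"
  proof -
    have "card (E - T) \<ge> 1" using NT finE by (simp add: Suc_le_eq card_gt_0_iff)
    moreover have "\<xi>T \<ge> 0" unfolding \<xi>T_def using res_pos TE by (intro sum_nonneg) (auto simp: less_imp_le)
    ultimately have "0 \<le> (real (card (E - T)) - 1) * \<xi>T" by (intro mult_nonneg_nonneg) auto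
    then show ?thesis by (simp add: algebra_simps)
  qed
  also have "\<dots> \<le> tcond E src dst w T * energy E w g"
    using tcond_ge1 energyT_le[of g] unfolding \<xi>T_def by (intro mult_left_mono) auto
  finally show ?thesis unfolding y_def g_def .
qed

end


context ctx begin

abbreviation "f0 \<equiv> tree_flow0 V E src dst T chi"

lemma f0_out: "e \<notin> T \<Longrightarrow> f0 e = 0"
  unfolding f0_eq by (simp add: tf_out)

lemma f0_feas: "feasible V E src dst chi f0"
  unfolding feasible_def f0_eq
proof
  fix c assume c: "c \<in> V"
  have "(\<Sum>e\<in>E. inc src dst e c * (\<Sum>a\<in>V. chi a * tree_flow src dst T a s e)) = (\<Sum>a\<in>V. chi a * (\<Sum>e\<in>E. inc src dst e c * tree_flow src dst T a s e))"
    by (simp add: sum_distrib_left sum.swap[of _ E] algebra_simps)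
  also have "\<dots> = (\<Sum>a\<in>V. chi a * ((if c = a then 1 else 0) - (if c = s then 1 else 0)))"
    using tf_div sV by (intro sum.cong) auto
  also have "\<dots> = (\<Sum>a\<in>V. (if a = c then chi a else 0) - (if c = s then 1 else 0) * chi a)"
    by (intro sum.cong) auto
  also have "\<dots> = (\<Sum>a\<in>V. (if a = c then chi a else 0)) - (if c = s then 1 else 0) * (\<Sum>a\<in>V. chi a)"
    by (simp add: sum_subtractf sum_distrib_left)
  also have "\<dots> = chi c" using chi0 c finV by (simp add: sum.delta')
  finally show "(\<Sum>e\<in>E. inc src dst e c * (\<Sum>a\<in>V. chi a * tree_flow src dst T a s e)) = chi c" .
qed

lemma stretch_nonneg: "e \<in> E \<Longrightarrow> stretch src dst w T e \<ge> 0"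
  unfolding stretch_def using res_pos path_edges_T TE
  by (intro mult_nonneg_nonneg sum_nonneg) (auto simp: less_imp_le subset_iff)

lemma st_nonneg: "tree_stretch E src dst w T \<ge> 0"
  unfolding tree_stretch_def using stretch_nonneg by (intro sum_nonneg) auto

lemma st_ge1: "tree_stretch E src dst w T \<ge> 1"
proof -
  obtain e where e: "e \<in> E" "e \<notin> T" using NT by blast
  have "{src e, dst e} \<subseteq> V" using ends e by auto
  then have "card {src e, dst e} \<le> card V" using finV by (rule card_mono[rotated])
  then have "card V \<ge> 2" using ends e by auto
  then have "card T \<ge> 1" using ST unfolding spanning_tree_def by auto
  then obtain e0 where e0: "e0 \<in> T" using card_gt_0_iff by fastforce
  have e0E: "e0 \<in> E" using e0 TE by auto
  have "tree_flow src dst T (src e0) (dst e0) e0 = 1" using tf_edge[OF e0] by simp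
  then have inP: "e0 \<in> path_edges src dst T (src e0) (dst e0)" using tf_support by force
  have "res w e0 \<le> (\<Sum>e'\<in>path_edges src dst T (src e0) (dst e0). res w e')"
    using inP res_pos path_edges_T TE finT
    by (intro member_le_sum) (auto simp: less_imp_le subset_iff intro: finite_subset[OF path_edges_T])
  then have "1 \<le> stretch src dst w T e0"
    unfolding stretch_def using res_pos[OF e0E] by (simp add: field_simps)
  also have "\<dots> \<le> tree_stretch E src dst w T"
    unfolding tree_stretch_def using stretch_nonneg e0E finE by (intro member_le_sum) auto
  finally show ?thesis .
qed

lemma st_bound: "energy E w f0 \<le> tree_stretch E src dst w T * energy E w fstar"
proof -
  define u where "u = tree_volt E src dst w T s f0"
  define \<xi>0 where "\<xi>0 = energy E w f0"
  define \<xi>s where "\<xi>s = energy E w fstar"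
  let ?p = "\<lambda>e. tree_flow src dst T (src e) (dst e)"
  have du: "u (src e) - u (dst e) = (\<Sum>e'\<in>E. res w e' * f0 e' * ?p e e')" if "e \<in> E" for e
    unfolding u_def by (rule volt_diff[OF that])
  have "\<xi>0 = (\<Sum>e\<in>E. f0 e * (u (src e) - u (dst e)))"
    unfolding \<xi>0_def energy_def
  proof (intro sum.cong refl)
    fix e assume e: "e \<in> E"
    show "res w e * (f0 e)\<^sup>2 = f0 e * (u (src e) - u (dst e))"
    proof (cases "e \<in> T")
      case True
      then have "u (src e) - u (dst e) = res w e * f0 e"
        using du[OF e] tf_edge_sum[OF True, of "\<lambda>e'. res w e' * f0 e'"] by simp
      then show ?thesis by (simp add: power2_eq_square)
    next
      case False then show ?thesis by (simp add: f0_out)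
    qed
  qed
  also have "\<dots> = (\<Sum>c\<in>V. u c * chi c)" unfolding adjoint using f0_feas unfolding feasible_def by simp
  also have "\<dots> = (\<Sum>e\<in>E. fstar e * (u (src e) - u (dst e)))"
  proof -
    have "(\<Sum>e\<in>E. fstar e * (u (src e) - u (dst e))) = (\<Sum>c\<in>V. u c * (\<Sum>e\<in>E. inc src dst e c * fstar e))"
      by (rule adjoint)
    also have "\<dots> = (\<Sum>c\<in>V. u c * chi c)" using fstar_feas unfolding feasible_def by simp
    finally show ?thesis by simp
  qed
  also have "\<dots> = (\<Sum>e\<in>E. res w e * fstar e * (w e * (u (src e) - u (dst e))))"
  proof (intro sum.cong refl)
    fix e assume e: "e \<in> E"
    have aux: "(ww::real) * r = 1 \<Longrightarrow> x * d = r * x * (ww * d)" for ww r x d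
    proof -
      assume "ww * r = 1"
      moreover have "r * x * (ww * d) = (ww * r) * (x * d)" by (simp add: ac_simps)
      ultimately show ?thesis by simp
    qed
    show "fstar e * (u (src e) - u (dst e)) = res w e * fstar e * (w e * (u (src e) - u (dst e)))"
      by (rule aux[OF w_res[OF e]])
  qed
  finally have x0: "\<xi>0 = \<dots>" .
  have A: "\<xi>0\<^sup>2 \<le> (\<Sum>e\<in>E. res w e * (fstar e)\<^sup>2) * (\<Sum>e\<in>E. res w e * (w e * (u (src e) - u (dst e)))\<^sup>2)"
    unfolding x0 using res_pos by (intro wcs) (auto simp: less_imp_le)
  have B1: "(\<Sum>e\<in>E. res w e * (w e * (u (src e) - u (dst e)))\<^sup>2) = (\<Sum>e\<in>E. w e * (u (src e) - u (dst e))\<^sup>2)"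
  proof (intro sum.cong refl)
    fix e assume e: "e \<in> E"
    have "res w e * (w e * (u (src e) - u (dst e)))\<^sup>2 = (w e * res w e) * (w e * (u (src e) - u (dst e))\<^sup>2)"
      by (simp add: power2_eq_square ac_simps)
    then show "res w e * (w e * (u (src e) - u (dst e)))\<^sup>2 = w e * (u (src e) - u (dst e))\<^sup>2"
      using w_res[OF e] by simp
  qed
  have B2: "(\<Sum>e\<in>E. w e * (u (src e) - u (dst e))\<^sup>2) \<le> (\<Sum>e\<in>E. stretch src dst w T e * \<xi>0)"
  proof (intro sum_mono)
    fix e assume e: "e \<in> E"
    have "(u (src e) - u (dst e))\<^sup>2 \<le> (\<Sum>e'\<in>E. res w e' * (?p e e')\<^sup>2) * (\<Sum>e'\<in>T. res w e' * (f0 e')\<^sup>2)"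
      unfolding du[OF e] by (rule pi_cs[OF e])
    also have "\<dots> \<le> (\<Sum>e'\<in>path_edges src dst T (src e) (dst e). res w e') * \<xi>0"
    proof (rule mult_mono)
      show "(\<Sum>e'\<in>E. res w e' * (?p e e')\<^sup>2) \<le> (\<Sum>e'\<in>path_edges src dst T (src e) (dst e). res w e')"
        by (rule pi_sq_sum[OF e])
      show "(\<Sum>e'\<in>T. res w e' * (f0 e')\<^sup>2) \<le> \<xi>0" unfolding \<xi>0_def by (rule energyT_le)
      show "0 \<le> (\<Sum>e'\<in>path_edges src dst T (src e) (dst e). res w e')"
        using res_pos path_edges_T TE by (intro sum_nonneg) (auto simp: less_imp_le subset_iff)
      show "0 \<le> (\<Sum>e'\<in>T. res w e' * (f0 e')\<^sup>2)"
        using res_pos TE by (intro sum_nonneg) (auto simp: less_imp_le subset_iff)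
    qed
    finally have "w e * (u (src e) - u (dst e))\<^sup>2 \<le> w e * ((\<Sum>e'\<in>path_edges src dst T (src e) (dst e). res w e') * \<xi>0)"
      using W e by (intro mult_left_mono) (auto simp: less_imp_le)
    also have "\<dots> = stretch src dst w T e * \<xi>0" unfolding stretch_def inv_res by simp
    finally show "w e * (u (src e) - u (dst e))\<^sup>2 \<le> stretch src dst w T e * \<xi>0" .
  qed
  have B3: "(\<Sum>e\<in>E. stretch src dst w T e * \<xi>0) = tree_stretch E src dst w T * \<xi>0"
    unfolding tree_stretch_def by (simp add: sum_distrib_right)
  have S1: "(\<Sum>e\<in>E. res w e * (fstar e)\<^sup>2) \<ge> 0" using res_pos by (intro sum_nonneg) (auto simp: less_imp_le)
  have "\<xi>0\<^sup>2 \<le> (\<Sum>e\<in>E. res w e * (fstar e)\<^sup>2) * (tree_stretch E src dst w T * \<xi>0)"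
    using order_trans[OF A mult_left_mono[OF _ S1]] B1 B2 B3 by simp
  then have sq: "\<xi>0\<^sup>2 \<le> \<xi>s * (tree_stretch E src dst w T * \<xi>0)" unfolding \<xi>s_def energy_def .
  have n0: "\<xi>0 \<ge> 0" unfolding \<xi>0_def by (rule energy_nonneg)
  have ns: "\<xi>s \<ge> 0" unfolding \<xi>s_def by (rule energy_nonneg)
  show ?thesis
  proof (cases "\<xi>0 = 0")
    case True then show ?thesis using st_nonneg ns unfolding \<xi>0_def \<xi>s_def by simp
  next
    case False
    then have "\<xi>0 > 0" using n0 by simp
    then have "\<xi>0 * \<xi>0 \<le> (tree_stretch E src dst w T * \<xi>s) * \<xi>0"
      using sq by (simp add: power2_eq_square algebra_simps)
    then have "\<xi>0 \<le> tree_stretch E src dst w T * \<xi>s" using \<open>\<xi>0 > 0\<close> by simp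
    then show ?thesis unfolding \<xi>0_def \<xi>s_def .
  qed
qed

abbreviation "upd \<equiv> cyc_update E src dst w T"

lemma cres_pos: "e \<in> E - T \<Longrightarrow> cycle_res E src dst w T e > 0"
  using cres_eq[of e] res_pos[of e] res_pos
  by (smt (verit, best) DiffD1 sum_nonneg zero_le_power2 mult_nonneg_nonneg)

lemma upd_feas:
  assumes e: "e \<in> E - T" and f: "feasible V E src dst chi f"
  shows "feasible V E src dst chi (upd f e)"
  unfolding feasible_def
proof
  fix c assume c: "c \<in> V"
  define a where "a = Delta E src dst w T e f / cycle_res E src dst w T e"
  have u: "upd f e = (\<lambda>e'. f e' - a * cycle_vec src dst T e e')" unfolding cyc_update_def a_def by simp
  have "(\<Sum>e'\<in>E. inc src dst e' c * upd f e e') = (\<Sum>e'\<in>E. inc src dst e' c * f e') - a * (\<Sum>e'\<in>E. inc src dst e' c * cycle_vec src dst T e e')"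
    unfolding u by (simp add: right_diff_distrib sum_subtractf sum_distrib_left mult.left_commute)
  then show "(\<Sum>e'\<in>E. inc src dst e' c * upd f e e') = chi c" using f c cyc_circ[OF e] unfolding feasible_def by simp
qed

lemma upd_energy:
  assumes e: "e \<in> E - T"
  shows "energy E w (upd f e) = energy E w f - (Delta E src dst w T e f)\<^sup>2 / cycle_res E src dst w T e"
proof -
  define D where "D = Delta E src dst w T e f"
  define R where "R = cycle_res E src dst w T e"
  have R: "R > 0" unfolding R_def using cres_pos[OF e] .
  let ?c = "cycle_vec src dst T e"
  have "energy E w (upd f e) = (\<Sum>e'\<in>E. res w e' * (f e')\<^sup>2 - 2 * (D / R) * (f e' * res w e' * ?c e') + (D / R)\<^sup>2 * (res w e' * (?c e')\<^sup>2))"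
    unfolding energy_def cyc_update_def D_def[symmetric] R_def[symmetric]
    by (intro sum.cong) (auto simp: power2_eq_square algebra_simps)
  also have "\<dots> = energy E w f - 2 * (D / R) * D + (D / R)\<^sup>2 * R"
    unfolding energy_def D_def R_def Delta_def cycle_res_def
    by (simp add: sum.distrib sum_subtractf sum_distrib_left)
  also have "\<dots> = energy E w f - D\<^sup>2 / R" using R by (simp add: power2_eq_square field_simps)
  finally show ?thesis unfolding D_def R_def .
qed

lemma Delta_g:
  assumes e: "e \<in> E - T"
  shows "Delta E src dst w T e f = (\<Sum>e'\<in>E. res w e' * (f e' - fstar e') * cycle_vec src dst T e e')"
proof -
  have o: "(\<Sum>e'\<in>E. res w e' * fstar e' * cycle_vec src dst T e e') = 0"
    by (rule fstar_orth) (use cyc_circ[OF e] in blast)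
  have "Delta E src dst w T e f = (\<Sum>e'\<in>E. res w e' * (f e' - fstar e') * cycle_vec src dst T e e') + (\<Sum>e'\<in>E. res w e' * fstar e' * cycle_vec src dst T e e')"
    unfolding Delta_def by (simp add: sum.distrib[symmetric] algebra_simps)
  then show ?thesis using o by simp
qed

lemma key_ineq:
  assumes f: "feasible V E src dst chi f"
  shows "energy E w (\<lambda>e. f e - fstar e) \<le> (\<Sum>e\<in>E - T. (Delta E src dst w T e f)\<^sup>2 / res w e)"
proof -
  define g where "g e = (if e \<in> E then f e - fstar e else 0)" for e
  define \<xi> where "\<xi> = energy E w (\<lambda>e. f e - fstar e)"
  have gz: "\<forall>e. e \<notin> E \<longrightarrow> g e = 0" unfolding g_def by simp
  have gd: "\<forall>c\<in>V. (\<Sum>e\<in>E. inc src dst e c * g e) = 0"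
    using div_diff[OF f] unfolding g_def by simp
  have dec: "g = (\<lambda>e'. \<Sum>e\<in>E - T. g e * cycle_vec src dst T e e')" by (rule circ_decomp[OF gz gd])
  have DG: "Delta E src dst w T e f = (\<Sum>e'\<in>E. res w e' * g e' * cycle_vec src dst T e e')" if "e \<in> E - T" for e
    unfolding Delta_g[OF that] g_def by (intro sum.cong) auto
  have "\<xi> = (\<Sum>e'\<in>E. res w e' * g e' * g e')"
    unfolding \<xi>_def energy_def g_def by (intro sum.cong) (auto simp: power2_eq_square)
  also have "\<dots> = (\<Sum>e'\<in>E. res w e' * g e' * (\<Sum>e\<in>E - T. g e * cycle_vec src dst T e e'))"
  proof (intro sum.cong refl)
    fix e' :: 'e
    have dece: "g e' = (\<Sum>e\<in>E - T. g e * cycle_vec src dst T e e')" by (rule fun_cong[OF dec, of e', simplified])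
    show "res w e' * g e' * g e' = res w e' * g e' * (\<Sum>e\<in>E - T. g e * cycle_vec src dst T e e')"
      using dece by simp
  qed
  also have "\<dots> = (\<Sum>e\<in>E - T. g e * (\<Sum>e'\<in>E. res w e' * g e' * cycle_vec src dst T e e'))"
    by (simp add: sum_distrib_left sum.swap[of _ "E - T"] algebra_simps)
  also have "\<dots> = (\<Sum>e\<in>E - T. res w e * g e * (Delta E src dst w T e f / res w e))"
  proof (intro sum.cong refl)
    fix e assume e: "e \<in> E - T"
    have r: "res w e > 0" using res_pos e by auto
    show "g e * (\<Sum>e'\<in>E. res w e' * g e' * cycle_vec src dst T e e') = res w e * g e * (Delta E src dst w T e f / res w e)"
      unfolding DG[OF e] using r by (simp add: field_simps)
  qed
  finally have x: "\<xi> = \<dots>" .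
  have A: "\<xi>\<^sup>2 \<le> (\<Sum>e\<in>E - T. res w e * (g e)\<^sup>2) * (\<Sum>e\<in>E - T. res w e * (Delta E src dst w T e f / res w e)\<^sup>2)"
    unfolding x using res_pos by (intro wcs) (auto simp: less_imp_le)
  have B1: "(\<Sum>e\<in>E - T. res w e * (g e)\<^sup>2) \<le> \<xi>"
  proof -
    have "(\<Sum>e\<in>E - T. res w e * (g e)\<^sup>2) = (\<Sum>e\<in>E - T. res w e * (f e - fstar e)\<^sup>2)"
      unfolding g_def by (intro sum.cong) auto
    also have "\<dots> \<le> (\<Sum>e\<in>E. res w e * (f e - fstar e)\<^sup>2)"
      by (intro sum_mono2[OF finE]) (auto intro!: mult_nonneg_nonneg less_imp_le[OF res_pos])
    finally show ?thesis unfolding \<xi>_def energy_def .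
  qed
  have B2: "(\<Sum>e\<in>E - T. res w e * (Delta E src dst w T e f / res w e)\<^sup>2) = (\<Sum>e\<in>E - T. (Delta E src dst w T e f)\<^sup>2 / res w e)"
    using res_pos by (intro sum.cong) (auto simp: power2_eq_square field_simps)
  have S2: "(\<Sum>e\<in>E - T. res w e * (Delta E src dst w T e f / res w e)\<^sup>2) \<ge> 0"
    using res_pos by (intro sum_nonneg) (auto simp: less_imp_le)
  have sq: "\<xi>\<^sup>2 \<le> \<xi> * (\<Sum>e\<in>E - T. (Delta E src dst w T e f)\<^sup>2 / res w e)"
    using order_trans[OF A mult_right_mono[OF B1 S2]] B2 by simp
  have "\<xi> \<ge> 0" unfolding \<xi>_def by (rule energy_nonneg)
  have S: "(\<Sum>e\<in>E - T. (Delta E src dst w T e f)\<^sup>2 / res w e) \<ge> 0"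
    using res_pos by (intro sum_nonneg) (auto simp: less_imp_le)
  show ?thesis
  proof (cases "\<xi> = 0")
    case True then show ?thesis using S unfolding \<xi>_def by simp
  next
    case False
    then have "\<xi> > 0" using \<open>\<xi> \<ge> 0\<close> by simp
    then show ?thesis using sq unfolding \<xi>_def by (simp add: power2_eq_square)
  qed
qed

end


definition EXPv where
  "EXPv E src dst w T K f h =
     (\<Sum>es\<in>{es. set es \<subseteq> E - T \<and> length es = K}.
        prod_list (map (cyc_prob E src dst w T) es) * h (foldl (cyc_update E src dst w T) f es))"

lemma lists_Suc:
  "{es. set es \<subseteq> S \<and> length es = Suc K} = (\<lambda>(e, es). e # es) ` (S \<times> {es. set es \<subseteq> S \<and> length es = K})"
proof (intro set_eqI iffI)
  fix xs assume "xs \<in> {es. set es \<subseteq> S \<and> length es = Suc K}"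
  then obtain e es where "xs = e # es" "e \<in> S" "set es \<subseteq> S" "length es = K"
    by (cases xs) auto
  then show "xs \<in> (\<lambda>(e, es). e # es) ` (S \<times> {es. set es \<subseteq> S \<and> length es = K})" by force
qed auto

lemma finite_lists_K: "finite S \<Longrightarrow> finite {es. set es \<subseteq> S \<and> length es = K}"
  using finite_lists_length_eq by blast

context ctx begin

abbreviation "pr \<equiv> cyc_prob E src dst w T"
abbreviation "tau \<equiv> tcond E src dst w T"

lemma tau_pos: "tau > 0" using tcond_ge1 by simp

lemma p_nonneg: "e \<in> E - T \<Longrightarrow> pr e \<ge> 0"
  unfolding cyc_prob_def using cres_pos[of e] res_pos[of e] tau_pos by (auto intro!: divide_nonneg_pos mult_pos_pos less_imp_le)

lemma p_sum: "(\<Sum>e\<in>E - T. pr e) = 1"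
proof -
  have "(\<Sum>e\<in>E - T. pr e) = (\<Sum>e\<in>E - T. cycle_res E src dst w T e / res w e) / tau"
    unfolding cyc_prob_def by (simp add: sum_divide_distrib divide_divide_eq_left mult.commute)
  then show ?thesis using tau_pos unfolding tcond_def by simp
qed

lemma EXP_0: "EXPv E src dst w T 0 f h = h f"
proof -
  have "{es. set es \<subseteq> E - T \<and> length es = 0} = {[]}" by auto
  then show ?thesis unfolding EXPv_def by simp
qed

lemma EXP_Suc: "EXPv E src dst w T (Suc K) f h = (\<Sum>e\<in>E - T. pr e * EXPv E src dst w T K (upd f e) h)"
proof -
  let ?L = "{es. set es \<subseteq> E - T \<and> length es = K}"
  have inj: "inj_on (\<lambda>(e, es). e # es) ((E - T) \<times> ?L)" by (auto simp: inj_on_def)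
  have "EXPv E src dst w T (Suc K) f h
     = (\<Sum>x\<in>(E - T) \<times> ?L. prod_list (map pr (fst x # snd x)) * h (foldl upd f (fst x # snd x)))"
    unfolding EXPv_def lists_Suc by (subst sum.reindex[OF inj]) (simp add: case_prod_beta)
  also have "\<dots> = (\<Sum>e\<in>E - T. \<Sum>es\<in>?L. prod_list (map pr (e # es)) * h (foldl upd f (e # es)))"
    by (rule sum.cartesian_product[symmetric, unfolded case_prod_beta])
  also have "\<dots> = (\<Sum>e\<in>E - T. pr e * EXPv E src dst w T K (upd f e) h)"
    unfolding EXPv_def by (simp add: sum_distrib_left mult.assoc)
  finally show ?thesis .
qed

lemma EXP_one: "EXPv E src dst w T K f (\<lambda>_. 1) = 1"
proof (induction K arbitrary: f)
  case 0 then show ?case by (simp add: EXP_0)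
next
  case (Suc K) then show ?case by (simp add: EXP_Suc p_sum)
qed

lemma EXP_affine: "EXPv E src dst w T K f (\<lambda>g. c + d * h g) = c + d * EXPv E src dst w T K f h"
proof -
  have "EXPv E src dst w T K f (\<lambda>g. c + d * h g) = c * EXPv E src dst w T K f (\<lambda>_. 1) + d * EXPv E src dst w T K f h"
    unfolding EXPv_def by (simp add: algebra_simps sum.distrib sum_distrib_left)
  then show ?thesis by (simp add: EXP_one)
qed

lemma feas_fold:
  "feasible V E src dst chi f \<Longrightarrow> set es \<subseteq> E - T \<Longrightarrow> feasible V E src dst chi (foldl upd f es)"
proof (induction es arbitrary: f)
  case (Cons e es) then show ?case using upd_feas by simp
qed simp

lemma prod_nonneg: "set es \<subseteq> E - T \<Longrightarrow> prod_list (map pr es) \<ge> 0"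
proof (induction es)
  case (Cons e es) then show ?case using p_nonneg by simp
qed simp

lemma EXP_mono:
  assumes "feasible V E src dst chi f" "\<forall>g. feasible V E src dst chi g \<longrightarrow> h1 g \<le> h2 g"
  shows "EXPv E src dst w T K f h1 \<le> EXPv E src dst w T K f h2"
  unfolding EXPv_def using assms feas_fold prod_nonneg
  by (intro sum_mono mult_left_mono) auto

lemma EXP_sqrt: "EXPv E src dst w T K f h \<le> sqrt (EXPv E src dst w T K f (\<lambda>g. (h g)\<^sup>2))"
proof -
  let ?L = "{es. set es \<subseteq> E - T \<and> length es = K}"
  let ?P = "\<lambda>es. prod_list (map pr es)"
  let ?H = "\<lambda>es. h (foldl upd f es)"
  have "(EXPv E src dst w T K f h)\<^sup>2 = (\<Sum>es\<in>?L. ?P es * 1 * ?H es)\<^sup>2" unfolding EXPv_def by simp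
  also have "\<dots> \<le> (\<Sum>es\<in>?L. ?P es * 1\<^sup>2) * (\<Sum>es\<in>?L. ?P es * (?H es)\<^sup>2)"
    using prod_nonneg by (intro wcs) auto
  also have "(\<Sum>es\<in>?L. ?P es * 1\<^sup>2) = 1" using EXP_one[of K f] unfolding EXPv_def by simp
  finally have "(EXPv E src dst w T K f h)\<^sup>2 \<le> EXPv E src dst w T K f (\<lambda>g. (h g)\<^sup>2)" unfolding EXPv_def by simp
  then have "sqrt ((EXPv E src dst w T K f h)\<^sup>2) \<le> sqrt (EXPv E src dst w T K f (\<lambda>g. (h g)\<^sup>2))"
    by (rule real_sqrt_le_mono)
  then show ?thesis by simp
qed

abbreviation "gap g \<equiv> energy E w g - energy E w fstar"

lemma gap_eq: "feasible V E src dst chi g \<Longrightarrow> gap g = energy E w (\<lambda>e. g e - fstar e)"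
  using energy_split by simp

lemma gap_step:
  assumes f: "feasible V E src dst chi f"
  shows "(\<Sum>e\<in>E - T. pr e * gap (upd f e)) \<le> (1 - 1 / tau) * gap f"
proof -
  let ?D = "\<lambda>e. Delta E src dst w T e f"
  have "(\<Sum>e\<in>E - T. pr e * gap (upd f e)) = (\<Sum>e\<in>E - T. pr e * gap f - (?D e)\<^sup>2 / res w e / tau)"
  proof (intro sum.cong refl)
    fix e assume e: "e \<in> E - T"
    have R: "cycle_res E src dst w T e > 0" using cres_pos[OF e] .
    have r: "res w e > 0" using res_pos e by auto
    have "pr e * gap (upd f e) = pr e * gap f - pr e * ((?D e)\<^sup>2 / cycle_res E src dst w T e)"
      unfolding upd_energy[OF e] by (simp add: algebra_simps)
    also have "pr e * ((?D e)\<^sup>2 / cycle_res E src dst w T e) = (?D e)\<^sup>2 / res w e / tau"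
      unfolding cyc_prob_def using R r tau_pos by (simp add: field_simps)
    finally show "pr e * gap (upd f e) = pr e * gap f - (?D e)\<^sup>2 / res w e / tau" .
  qed
  also have "\<dots> = gap f - (\<Sum>e\<in>E - T. (?D e)\<^sup>2 / res w e) / tau"
    by (simp add: sum_subtractf sum_distrib_right[symmetric] p_sum sum_divide_distrib)
  also have "\<dots> \<le> gap f - gap f / tau"
  proof -
    have "gap f \<le> (\<Sum>e\<in>E - T. (?D e)\<^sup>2 / res w e)" using key_ineq[OF f] gap_eq[OF f] by simp
    then have "gap f / tau \<le> (\<Sum>e\<in>E - T. (?D e)\<^sup>2 / res w e) / tau"
      using tau_pos by (intro divide_right_mono) auto
    then show ?thesis by linarith
  qed
  also have "\<dots> = (1 - 1 / tau) * gap f"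
  proof -
    have gen: "\<And>x t::real. x - x / t = (1 - 1 / t) * x" by (simp add: left_diff_distrib)
    show ?thesis by (rule gen)
  qed
  finally show ?thesis .
qed

lemma EXP_gap:
  assumes "feasible V E src dst chi f"
  shows "EXPv E src dst w T K f gap \<le> (1 - 1 / tau) ^ K * gap f"
  using assms
proof (induction K arbitrary: f)
  case 0 then show ?case by (simp add: EXP_0)
next
  case (Suc K)
  have q: "(1 - 1 / tau) ^ K \<ge> 0" using tcond_ge1 by simp
  have "EXPv E src dst w T (Suc K) f gap = (\<Sum>e\<in>E - T. pr e * EXPv E src dst w T K (upd f e) gap)"
    by (rule EXP_Suc)
  also have "\<dots> \<le> (\<Sum>e\<in>E - T. pr e * ((1 - 1 / tau) ^ K * gap (upd f e)))"
    using Suc upd_feas p_nonneg by (intro sum_mono mult_left_mono) auto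
  also have "\<dots> = (1 - 1 / tau) ^ K * (\<Sum>e\<in>E - T. pr e * gap (upd f e))"
    by (simp add: sum_distrib_left algebra_simps)
  also have "\<dots> \<le> (1 - 1 / tau) ^ K * ((1 - 1 / tau) * gap f)"
    using gap_step[OF Suc.prems] q by (rule mult_left_mono)
  finally show ?case by (simp add: algebra_simps)
qed

end


context ctx begin

abbreviation "stT \<equiv> tree_stretch E src dst w T"

lemma K_bound:
  assumes eps: "0 < eps" and K: "K = nat \<lceil>tau * ln (stT * tau / eps)\<rceil>"
  shows "(1 - 1 / tau) ^ K \<le> eps / (stT * tau)"
proof -
  define y where "y = stT * tau / eps"
  have st1: "stT \<ge> 1" by (rule st_ge1)
  have t1: "tau \<ge> 1" by (rule tcond_ge1)
  have ypos: "y > 0" unfolding y_def using st1 t1 eps by simp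
  have a0: "0 \<le> 1 - 1 / tau" using t1 by simp
  have a1: "1 - 1 / tau \<le> exp (- (1 / tau))" using exp_ge_add_one_self[of "- (1 / tau)"] by simp
  have "(1 - 1 / tau) ^ K \<le> exp (- (1 / tau)) ^ K" by (rule power_mono[OF a1 a0])
  also have "\<dots> = exp (real K * (- (1 / tau)))" by (rule exp_of_nat_mult[symmetric])
  also have "\<dots> \<le> exp (- ln y)"
  proof -
    have "tau * ln y \<le> real K" unfolding K y_def by (rule real_nat_ceiling_ge)
    then have "ln y \<le> real K / tau" using t1 by (simp add: field_simps)
    then have "real K * (- (1 / tau)) \<le> - ln y" by simp
    then show ?thesis by simp
  qed
  also have "\<dots> = 1 / y" using ypos by (simp add: exp_minus')
  also have "\<dots> = eps / (stT * tau)" unfolding y_def by simp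
  finally show ?thesis .
qed

lemma mnorm_xstar: "mnorm V (laplacian E src dst w) xstar = sqrt (energy E w fstar)"
proof -
  have "(\<Sum>e\<in>E. w e * (xstar (src e) - xstar (dst e))\<^sup>2) = energy E w fstar"
    unfolding energy_def
  proof (intro sum.cong refl)
    fix e assume e: "e \<in> E"
    have "w e * (xstar (src e) - xstar (dst e))\<^sup>2 = w e * (res w e * fstar e)\<^sup>2" using rfstar[OF e] by simp
    also have "\<dots> = (w e * res w e) * (res w e * (fstar e)\<^sup>2)" by (simp add: power2_eq_square ac_simps)
    also have "\<dots> = res w e * (fstar e)\<^sup>2" using w_res[OF e] by simp
    finally show "w e * (xstar (src e) - xstar (dst e))\<^sup>2 = res w e * (fstar e)\<^sup>2" .
  qed
  then show ?thesis unfolding mnorm_def QF by simp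
qed

lemma main:
  assumes eps: "0 < eps" "eps < 1" and K: "K = nat \<lceil>tau * ln (stT * tau / eps)\<rceil>"
  shows "EXPv E src dst w T K f0 (energy E w) \<le> (1 + eps) * energy E w fstar \<and>
    EXPv E src dst w T K f0 (\<lambda>g. mnorm V (laplacian E src dst w) (\<lambda>a. tree_volt E src dst w T s g a - xstar a))
      \<le> sqrt eps * mnorm V (laplacian E src dst w) xstar"
proof -
  define q where "q = (1 - 1 / tau) ^ K"
  define \<xi>s where "\<xi>s = energy E w fstar"
  have t1: "tau \<ge> 1" by (rule tcond_ge1)
  have st1: "stT \<ge> 1" by (rule st_ge1)
  have q0: "q \<ge> 0" unfolding q_def using t1 by simp
  have qb: "q \<le> eps / (stT * tau)" unfolding q_def by (rule K_bound[OF eps(1) K])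
  have xs0: "\<xi>s \<ge> 0" unfolding \<xi>s_def by (rule energy_nonneg)
  have g0: "gap f0 \<ge> 0" using gap_eq[OF f0_feas] energy_nonneg by simp
  have g1: "gap f0 \<le> stT * \<xi>s" using st_bound energy_nonneg[of fstar] unfolding \<xi>s_def by simp
  have "EXPv E src dst w T K f0 gap \<le> q * gap f0" unfolding q_def by (rule EXP_gap[OF f0_feas])
  also have "\<dots> \<le> q * (stT * \<xi>s)" using g1 q0 by (rule mult_left_mono)
  also have "\<dots> \<le> (eps / (stT * tau)) * (stT * \<xi>s)"
    using qb st1 xs0 by (intro mult_right_mono) auto
  also have "\<dots> = eps * \<xi>s / tau" using st1 t1 by (simp add: field_simps)
  finally have EG: "EXPv E src dst w T K f0 gap \<le> eps * \<xi>s / tau" .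
  have ET: "eps * \<xi>s / tau \<le> eps * \<xi>s"
  proof -
    have a0: "eps * \<xi>s \<ge> 0" using eps xs0 by simp
    have "eps * \<xi>s * 1 \<le> eps * \<xi>s * tau" using mult_left_mono[OF t1 a0] .
    then show ?thesis using t1 by (simp add: divide_le_eq)
  qed
  have c1: "EXPv E src dst w T K f0 (energy E w) \<le> (1 + eps) * \<xi>s"
  proof -
    have fe: "energy E w = (\<lambda>g. \<xi>s + 1 * gap g)" unfolding \<xi>s_def by (simp add: fun_eq_iff)
    have "EXPv E src dst w T K f0 (energy E w) = \<xi>s + 1 * EXPv E src dst w T K f0 gap"
      by (subst fe) (rule EXP_affine)
    then show ?thesis using EG ET by (simp add: algebra_simps)
  qed
  let ?N = "\<lambda>g. mnorm V (laplacian E src dst w) (\<lambda>a. tree_volt E src dst w T s g a - xstar a)"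
  have "EXPv E src dst w T K f0 (\<lambda>g. (?N g)\<^sup>2) \<le> EXPv E src dst w T K f0 (\<lambda>g. 0 + tau * gap g)"
  proof (rule EXP_mono[OF f0_feas], intro allI impI)
    fix g assume "feasible V E src dst chi g"
    then show "(?N g)\<^sup>2 \<le> 0 + tau * gap g" using volt_bound gap_eq by simp
  qed
  also have "\<dots> = tau * EXPv E src dst w T K f0 gap" by (simp only: EXP_affine)
  also have "\<dots> \<le> tau * (eps * \<xi>s / tau)" using EG t1 by (intro mult_left_mono) auto
  also have "\<dots> = eps * \<xi>s" using t1 by simp
  finally have N2: "EXPv E src dst w T K f0 (\<lambda>g. (?N g)\<^sup>2) \<le> eps * \<xi>s" .
  have "EXPv E src dst w T K f0 ?N \<le> sqrt (EXPv E src dst w T K f0 (\<lambda>g. (?N g)\<^sup>2))" by (rule EXP_sqrt)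
  also have "\<dots> \<le> sqrt (eps * \<xi>s)" using N2 by (rule real_sqrt_le_mono)
  also have "\<dots> = sqrt eps * mnorm V (laplacian E src dst w) xstar" unfolding mnorm_xstar \<xi>s_def by (simp add: real_sqrt_mult)
  finally show ?thesis using c1 unfolding \<xi>s_def by blast
qed

end

theorem theorem3p1:
  fixes V :: "'v set" and E :: "'e set" and src dst :: "'e \<Rightarrow> 'v"
    and w :: "'e \<Rightarrow> real" and T :: "'e set" and s :: 'v and chi :: "'v \<Rightarrow> real"
    and eps :: real and K :: nat
  assumes "graph V E src dst"
    and "connected_on src dst V E"
    and "\<forall>e\<in>E. w e > 0"
    and "spanning_tree V E src dst T"
    and "s \<in> V"
    and "(\<Sum>a\<in>V. chi a) = 0"
    and "0 < eps" and "eps < 1"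
    and "E - T \<noteq> {}"
    and "K = nat \<lceil>tcond E src dst w T *
                  ln (tree_stretch E src dst w T * tcond E src dst w T / eps)\<rceil>"
  shows "(solver_exp E src dst w T K
           (\<lambda>es. energy E w (solver_flow V E src dst w T chi es))
         \<le> (1 + eps) * energy E w (opt_flow V E src dst w chi))
       \<and> (solver_exp E src dst w T K
           (\<lambda>es. mnorm V (laplacian E src dst w)
                   (\<lambda>a. tree_volt E src dst w T s (solver_flow V E src dst w T chi es) a
                        - mvec V (pinv V (laplacian E src dst w)) chi a))
         \<le> sqrt eps * mnorm V (laplacian E src dst w)
                        (mvec V (pinv V (laplacian E src dst w)) chi))"
proof -
  interpret ctx V E src dst w T s chi
    by unfold_locales (use assms in auto)
  have eq1: "solver_exp E src dst w T K (\<lambda>es. energy E w (solver_flow V E src dst w T chi es))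
      = EXPv E src dst w T K (tree_flow0 V E src dst T chi) (energy E w)"
    unfolding solver_exp_def solver_flow_def EXPv_def ..
  have eq2: "solver_exp E src dst w T K
           (\<lambda>es. mnorm V (laplacian E src dst w)
                   (\<lambda>a. tree_volt E src dst w T s (solver_flow V E src dst w T chi es) a
                        - mvec V (pinv V (laplacian E src dst w)) chi a))
      = EXPv E src dst w T K (tree_flow0 V E src dst T chi)
          (\<lambda>g. mnorm V (laplacian E src dst w) (\<lambda>a. tree_volt E src dst w T s g a - mvec V (pinv V (laplacian E src dst w)) chi a))"
    unfolding solver_exp_def solver_flow_def EXPv_def ..
  show ?thesis unfolding eq1 eq2 opt_eq using main[OF assms(7,8,10)] by blast
qed


end
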